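(* Under the standing assumptions, let $z\in\mathbb{C}$ with $\operatorname{Re}z\le\frac12(1-\frac1c)$. Then there is $n>0$ such that for all $u\in C_0^\infty(\{|x|\ge n\})$ and all sufficiently small $\lambda>0$, $$\|(\mathcal{A}^\lambda-z)u\|_{L^2}\ge\tfrac14\big(1-\tfrac1c\big)\|u\|_{L^2}.$$
   Context: Standing assumptions: $f:\mathbb{R}\to\mathbb{R}$ is $C^1$ with $f(0)=f'(0)=0$. $\mathcal{M}$ is the Fourier multiplier with symbol $\alpha\ge0$, $a|k|^m\le\alpha(k)\le b|k|^m$ for large $|k|$ ($m\ge1$), $\alpha$ locally bounded. $c>1$ and $u_c\in H^m(\mathbb{R})$ is a real solution of $\mathcal{M}u_c+(1-\frac1c)u_c-\frac1cf(u_c)=0$ with $u_c(x)\to0$ as $|x|\to\infty$. With $\mathcal{E}^{\lambda,-}$ the Fourier multiplier with symbol $\frac{\lambda}{\lambda-ick}$, $\mathcal{A}^\lambda=\mathcal{M}+1-\frac1c(1-\mathcal{E}^{\lambda,-})(1+f'(u_c))$. *)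

theory Defs
  imports "HOL-Analysis.Analysis"
begin

definition smooth_fun :: "(real \<Rightarrow> complex) \<Rightarrow> bool" where
  "smooth_fun u \<longleftrightarrow> (\<exists>D :: nat \<Rightarrow> real \<Rightarrow> complex. D 0 = u \<and>
      (\<forall>j x. (D j has_vector_derivative D (Suc j) x) (at x)))"

definition fsupport :: "(real \<Rightarrow> complex) \<Rightarrow> real set" where
  "fsupport u = closure {x. u x \<noteq> 0}"

definition test_on :: "real set \<Rightarrow> (real \<Rightarrow> complex) \<Rightarrow> bool" where
  "test_on S u \<longleftrightarrow> smooth_fun u \<and> compact (fsupport u) \<and> fsupport u \<subseteq> S"

abbreviation test_fun :: "(real \<Rightarrow> complex) \<Rightarrow> bool" where
  "test_fun u \<equiv> test_on UNIV u"

definition L2 :: "(real \<Rightarrow> complex) \<Rightarrow> bool" where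
  "L2 g \<longleftrightarrow> g \<in> borel_measurable lborel \<and> integrable lborel (\<lambda>x. (cmod (g x))\<^sup>2)"

definition L2norm :: "(real \<Rightarrow> complex) \<Rightarrow> real" where
  "L2norm g = sqrt (integral\<^sup>L lborel (\<lambda>x. (cmod (g x))\<^sup>2))"

text \<open>Fourier transform (convention: hat g(k) = integral of e^{-ikx} g(x) dx) and
  its inverse, as Lebesgue integrals.\<close>
definition fourier :: "(real \<Rightarrow> complex) \<Rightarrow> real \<Rightarrow> complex" where
  "fourier g k = integral\<^sup>L lborel (\<lambda>x. cis (- (k * x)) * g x)"

definition inv_fourier :: "(real \<Rightarrow> complex) \<Rightarrow> real \<Rightarrow> complex" where
  "inv_fourier h x = complex_of_real (1 / (2 * pi)) * integral\<^sup>L lborel (\<lambda>k. cis (k * x) * h k)"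

text \<open>Fourier multiplier with symbol sigma, applied to a function whose Fourier
  transform is given by the integral above (compactly supported L^2 functions).\<close>
definition fmult :: "(real \<Rightarrow> complex) \<Rightarrow> (real \<Rightarrow> complex) \<Rightarrow> real \<Rightarrow> complex" where
  "fmult \<sigma> g = inv_fourier (\<lambda>k. \<sigma> k * fourier g k)"

text \<open>w is the (L^2, Plancherel) Fourier transform of the L^2 function u:
  characterised by Parseval's identity against all test functions.\<close>
definition is_L2_fourier :: "(real \<Rightarrow> complex) \<Rightarrow> (real \<Rightarrow> complex) \<Rightarrow> bool" where
  "is_L2_fourier u w \<longleftrightarrow> L2 u \<and> L2 w \<and>
     (\<forall>\<phi>. test_fun \<phi> \<longrightarrow>
        integral\<^sup>L lborel (\<lambda>x. u x * cnj (\<phi> x)) =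
        complex_of_real (1 / (2 * pi)) * integral\<^sup>L lborel (\<lambda>k. w k * cnj (fourier \<phi> k)))"

definition sobolev :: "real \<Rightarrow> (real \<Rightarrow> complex) \<Rightarrow> bool" where
  "sobolev m u \<longleftrightarrow> (\<exists>w. is_L2_fourier u w \<and>
      L2 (\<lambda>k. complex_of_real ((1 + k\<^sup>2) powr (m / 2)) * w k))"

text \<open>u solves M u + (1 - 1/c) u - (1/c) f(u) = 0 (equality of L^2 functions,
  expressed by pairing with all test functions; M u has Fourier transform alpha * hat u).\<close>
definition solves_profile_eq ::
  "(real \<Rightarrow> real) \<Rightarrow> (real \<Rightarrow> real) \<Rightarrow> real \<Rightarrow> (real \<Rightarrow> real) \<Rightarrow> bool" where
  "solves_profile_eq \<alpha> f c u \<longleftrightarrow> (\<exists>w. is_L2_fourier (\<lambda>x. complex_of_real (u x)) w \<and>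
     (\<forall>\<phi>. test_fun \<phi> \<longrightarrow>
        complex_of_real (1 / (2 * pi)) *
          integral\<^sup>L lborel (\<lambda>k. complex_of_real (\<alpha> k) * w k * cnj (fourier \<phi> k))
        + integral\<^sup>L lborel (\<lambda>x. complex_of_real ((1 - 1 / c) * u x - (1 / c) * f (u x)) * cnj (\<phi> x))
        = 0))"

definition Esym :: "real \<Rightarrow> real \<Rightarrow> real \<Rightarrow> complex" where
  "Esym c lam k = complex_of_real lam / (complex_of_real lam - \<i> * complex_of_real (c * k))"

definition Aop :: "(real \<Rightarrow> real) \<Rightarrow> (real \<Rightarrow> real) \<Rightarrow> real \<Rightarrow> (real \<Rightarrow> real) \<Rightarrow> real
                    \<Rightarrow> (real \<Rightarrow> complex) \<Rightarrow> real \<Rightarrow> complex" where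
  "Aop \<alpha> df c uc lam u x =
     (let g = (\<lambda>y. (1 + complex_of_real (df (uc y))) * u y) in
      fmult (\<lambda>k. complex_of_real (\<alpha> k)) u x + u x
      - complex_of_real (1 / c) * (g x - fmult (Esym c lam) g x))"

end

theory Submission
  imports Defs "HOL-Probability.Probability"
begin


lemma cis_borel[measurable]: "cis \<in> borel_measurable borel"
  by (intro borel_measurable_continuous_onI continuous_intros)

lemma cnj_borel[measurable]: "f \<in> borel_measurable M \<Longrightarrow> (\<lambda>x. cnj (f x)) \<in> borel_measurable M"
  by (rule measurable_compose[of f M borel], assumption, intro borel_measurable_continuous_onI continuous_intros)

lemma of_real_borel[measurable]: "f \<in> borel_measurable M \<Longrightarrow> (\<lambda>x. complex_of_real (f x)) \<in> borel_measurable M"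
  by (rule measurable_compose[of f M borel], assumption, intro borel_measurable_continuous_onI continuous_intros)


lemma "(\<lambda>p::real\<times>real. cis (- (fst p * snd p))) \<in> borel_measurable (lborel \<Otimes>\<^sub>M lborel)" by measurable

lemma integrable_prod_L2:
  fixes p q :: "real \<Rightarrow> complex"
  assumes [measurable]: "p \<in> borel_measurable lborel" "q \<in> borel_measurable lborel"
    and ip: "integrable lborel (\<lambda>x. (cmod (p x))\<^sup>2)" and iq: "integrable lborel (\<lambda>x. (cmod (q x))\<^sup>2)"
  shows "integrable lborel (\<lambda>x. p x * q x)"
proof (rule Bochner_Integration.integrable_bound)
  show "integrable lborel (\<lambda>x. ((cmod (p x))\<^sup>2 + (cmod (q x))\<^sup>2) / 2)"
    using ip iq by auto
  show "(\<lambda>x. p x * q x) \<in> borel_measurable lborel" by measurable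
  show "AE x in lborel. norm (p x * q x) \<le> norm (((cmod (p x))\<^sup>2 + (cmod (q x))\<^sup>2) / 2)"
  proof (rule AE_I2)
    fix x
    have "cmod (p x) * cmod (q x) \<le> ((cmod (p x))\<^sup>2 + (cmod (q x))\<^sup>2) / 2"
      using sum_squares_bound[of "cmod (p x)" "cmod (q x)"] by (simp add: power2_eq_square)
    then show "norm (p x * q x) \<le> norm (((cmod (p x))\<^sup>2 + (cmod (q x))\<^sup>2) / 2)"
      by (simp add: norm_mult)
  qed
qed


lemma cs_bound:
  fixes p q :: "real \<Rightarrow> complex"
  assumes [measurable]: "p \<in> borel_measurable lborel" "q \<in> borel_measurable lborel"
    and ip: "integrable lborel (\<lambda>x. (cmod (p x))\<^sup>2)" and iq: "integrable lborel (\<lambda>x. (cmod (q x))\<^sup>2)"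
  shows "(\<integral>x. cmod (p x) * cmod (q x) \<partial>lborel) \<le>
     sqrt (\<integral>x. (cmod (p x))\<^sup>2 \<partial>lborel) * sqrt (\<integral>x. (cmod (q x))\<^sup>2 \<partial>lborel)"
proof -
  define A where "A = (\<integral>x. (cmod (p x))\<^sup>2 \<partial>lborel)"
  define B where "B = (\<integral>x. (cmod (q x))\<^sup>2 \<partial>lborel)"
  define I where "I = (\<integral>x. cmod (p x) * cmod (q x) \<partial>lborel)"
  have A0: "A \<ge> 0" unfolding A_def by (intro integral_nonneg_AE) auto
  have B0: "B \<ge> 0" unfolding B_def by (intro integral_nonneg_AE) auto
  have I0: "I \<ge> 0" unfolding I_def by (intro integral_nonneg_AE) auto
  have ipq: "integrable lborel (\<lambda>x. cmod (p x) * cmod (q x))"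
    using integrable_norm[OF integrable_prod_L2[OF assms]] by (simp add: norm_mult)
  have key: "I \<le> (t * A + B / t) / 2" if t: "t > 0" for t
  proof -
    have "I \<le> (\<integral>x. (t * (cmod (p x))\<^sup>2 + (cmod (q x))\<^sup>2 / t) / 2 \<partial>lborel)"
      unfolding I_def
    proof (intro integral_mono ipq)
      show "integrable lborel (\<lambda>x. (t * (cmod (p x))\<^sup>2 + (cmod (q x))\<^sup>2 / t) / 2)"
        using ip iq by auto
      fix x
      have "0 \<le> (sqrt t * cmod (p x) - cmod (q x) / sqrt t)\<^sup>2" by simp
      also have "\<dots> = t * (cmod (p x))\<^sup>2 + (cmod (q x))\<^sup>2 / t - 2 * cmod (p x) * cmod (q x)"
        using t by (simp add: power2_diff power_mult_distrib power_divide)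
      finally show "cmod (p x) * cmod (q x) \<le> (t * (cmod (p x))\<^sup>2 + (cmod (q x))\<^sup>2 / t) / 2"
        by simp
    qed
    also have "\<dots> = (t * A + B / t) / 2"
      unfolding A_def B_def using ip iq by simp
    finally show ?thesis .
  qed
  show ?thesis
    unfolding A_def[symmetric] B_def[symmetric] I_def[symmetric]
  proof (cases "A = 0 \<or> B = 0")
    case True
    have "I \<le> 0"
    proof (rule ccontr)
      assume "\<not> I \<le> 0"
      hence Ip: "I > 0" by simp
      show False
      proof (cases "A = 0")
        case True
        have "I \<le> (0 + B / ((B + 1) / I)) / 2" using key[of "(B+1)/I"] Ip B0 True by simp
        also have "\<dots> = I * (B / (B+1)) / 2" using Ip B0 by (simp add: field_simps)
        also have "\<dots> < I" using Ip B0 by (simp add: field_simps add_nonneg_pos)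
        finally show False by simp
      next
        case False
        hence B: "B = 0" using \<open>A = 0 \<or> B = 0\<close> by simp
        have "I \<le> (I / (A+1) * A + 0) / 2" using key[of "I/(A+1)"] Ip A0 B by simp
        also have "\<dots> < I" using Ip A0 by (simp add: field_simps add_nonneg_pos)
        finally show False by simp
      qed
    qed
    then show "I \<le> sqrt A * sqrt B" using A0 B0 by (meson order_trans real_sqrt_ge_zero zero_le_mult_iff)
  next
    case False
    hence Ap: "A > 0" and Bp: "B > 0" using A0 B0 by auto
    have "I \<le> (sqrt B / sqrt A * A + B / (sqrt B / sqrt A)) / 2"
      using key[of "sqrt B / sqrt A"] Ap Bp by simp
    also have "\<dots> = sqrt A * sqrt B"
      using Ap Bp by (simp add: field_simps real_sqrt_mult[symmetric] flip: real_sqrt_mult)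
    finally show "I \<le> sqrt A * sqrt B" .
  qed
qed


lemma integrable_tensor:
  fixes a b :: "real \<Rightarrow> complex"
  assumes [measurable]: "a \<in> borel_measurable lborel" "b \<in> borel_measurable lborel"
    and ia: "integrable lborel a" and ib: "integrable lborel b"
  shows "integrable (lborel \<Otimes>\<^sub>M lborel) (\<lambda>(x, k). a x * b k)"
proof (rule lborel_pair.Fubini_integrable)
  show "(\<lambda>(x, k). a x * b k) \<in> borel_measurable (lborel \<Otimes>\<^sub>M lborel)" by measurable
  have "(\<lambda>x. LBINT y. norm (case (x, y) of (x, k) \<Rightarrow> a x * b k)) = (\<lambda>x. cmod (a x) * (LBINT y. cmod (b y)))"
    by (simp add: norm_mult)
  moreover have "integrable lborel (\<lambda>x. cmod (a x) * (LBINT y. cmod (b y)))"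
    using ia by auto
  ultimately show "integrable lborel (\<lambda>x. LBINT y. norm (case (x, y) of (x, k) \<Rightarrow> a x * b k))" by simp
  show "AE x in lborel. integrable lborel (\<lambda>y. case (x, y) of (x, k) \<Rightarrow> a x * b k)"
    using ib by auto
qed

lemma fub_swap:
  fixes a b :: "real \<Rightarrow> complex" and \<kappa> :: "real \<Rightarrow> real \<Rightarrow> complex"
  assumes [measurable]: "a \<in> borel_measurable lborel" "b \<in> borel_measurable lborel"
    and ia: "integrable lborel a" and ib: "integrable lborel b"
    and km[measurable]: "(\<lambda>(x, k). \<kappa> x k) \<in> borel_measurable (lborel \<Otimes>\<^sub>M lborel)"
    and kb: "\<And>x k. cmod (\<kappa> x k) \<le> 1"
  shows "(\<integral>x. a x * (\<integral>k. b k * \<kappa> x k \<partial>lborel) \<partial>lborel) = (\<integral>k. b k * (\<integral>x. a x * \<kappa> x k \<partial>lborel) \<partial>lborel)"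
proof -
  have int: "integrable (lborel \<Otimes>\<^sub>M lborel) (\<lambda>(x, k). a x * b k * \<kappa> x k)"
  proof (rule Bochner_Integration.integrable_bound[OF integrable_tensor[OF assms(1-4)]])
    show "(\<lambda>(x, k). a x * b k * \<kappa> x k) \<in> borel_measurable (lborel \<Otimes>\<^sub>M lborel)" by measurable
    show "AE p in lborel \<Otimes>\<^sub>M lborel. norm (case p of (x, k) \<Rightarrow> a x * b k * \<kappa> x k) \<le> norm (case p of (x, k) \<Rightarrow> a x * b k)"
    proof (rule AE_I2, clarify)
      fix x k
      have "cmod (a x * b k * \<kappa> x k) = cmod (a x * b k) * cmod (\<kappa> x k)" by (simp add: norm_mult)
      also have "\<dots> \<le> cmod (a x * b k) * 1" by (intro mult_left_mono kb) auto
      finally show "cmod (a x * b k * \<kappa> x k) \<le> cmod (a x * b k)" by simp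
    qed
  qed
  have "(\<integral>x. a x * (\<integral>k. b k * \<kappa> x k \<partial>lborel) \<partial>lborel) = (\<integral>x. (\<integral>k. a x * b k * \<kappa> x k \<partial>lborel) \<partial>lborel)"
    by (simp add: mult.assoc)
  also have "\<dots> = (\<integral>k. (\<integral>x. a x * b k * \<kappa> x k \<partial>lborel) \<partial>lborel)"
    using lborel_pair.Fubini_integral[OF int] by simp
  also have "\<dots> = (\<integral>k. b k * (\<integral>x. a x * \<kappa> x k \<partial>lborel) \<partial>lborel)"
  proof -
    have "\<And>k. (\<integral>x. a x * b k * \<kappa> x k \<partial>lborel) = b k * (\<integral>x. a x * \<kappa> x k \<partial>lborel)"
      by (subst integral_mult_right_zero[symmetric]) (simp add: ac_simps)
    then show ?thesis by simp
  qed
  finally show ?thesis .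
qed


lemma gauss_ft:
  assumes s: "\<sigma> > 0"
  shows "(\<integral>x. cis (a * x) * complex_of_real (normal_density 0 \<sigma> x) \<partial>lborel) = complex_of_real (exp (- (\<sigma> * a)\<^sup>2 / 2))"
proof -
  have "(\<integral>x. cis (a * x) * complex_of_real (normal_density 0 \<sigma> x) \<partial>lborel)
      = \<bar>\<sigma>\<bar> *\<^sub>R (\<integral>y. cis (a * (0 + \<sigma> * y)) * complex_of_real (normal_density 0 \<sigma> (0 + \<sigma> * y)) \<partial>lborel)"
    using s by (intro lborel_integral_real_affine) simp
  also have "\<dots> = (\<integral>y. std_normal_density y *\<^sub>R iexp ((\<sigma> * a) * y) \<partial>lborel)"
  proof -
    have "\<And>y. \<sigma> * normal_density 0 \<sigma> (\<sigma> * y) = std_normal_density y"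
      using s by (simp add: normal_density_def power_mult_distrib real_sqrt_mult field_simps)
    note e = this
    have "\<And>y. \<bar>\<sigma>\<bar> *\<^sub>R (cis (a * (0 + \<sigma> * y)) * complex_of_real (normal_density 0 \<sigma> (0 + \<sigma> * y)))
       = std_normal_density y *\<^sub>R iexp ((\<sigma> * a) * y)"
    proof -
      fix y
      have "\<bar>\<sigma>\<bar> *\<^sub>R (cis (a * (0 + \<sigma> * y)) * complex_of_real (normal_density 0 \<sigma> (0 + \<sigma> * y)))
          = complex_of_real (\<sigma> * normal_density 0 \<sigma> (\<sigma> * y)) * cis ((\<sigma> * a) * y)"
        using s by (simp add: scaleR_conv_of_real ac_simps)
      also have "\<dots> = std_normal_density y *\<^sub>R iexp ((\<sigma> * a) * y)"
        by (simp add: e cis_conv_exp scaleR_conv_of_real)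
      finally show "?thesis y" .
    qed
    then show ?thesis by (simp flip: integral_scaleR_right)
  qed
  also have "\<dots> = char std_normal_distribution (\<sigma> * a)"
    unfolding char_def by (subst integral_density) (auto simp: normal_density_nonneg)
  also have "\<dots> = complex_of_real (exp (- (\<sigma> * a)\<^sup>2 / 2))"
    by (simp add: char_std_normal_distribution)
  finally show ?thesis .
qed


lemma nd_meas[measurable]:
  "f \<in> borel_measurable M \<Longrightarrow> g \<in> borel_measurable M \<Longrightarrow> (\<lambda>x. normal_density (f x) s (g x)) \<in> borel_measurable M"
proof -
  assume [measurable]: "f \<in> borel_measurable M" "g \<in> borel_measurable M"
  have "(\<lambda>x. normal_density (f x) s (g x)) = (\<lambda>x. normal_density 0 s (g x - f x))"
    by (simp add: normal_density_def)
  then show ?thesis by simp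
qed

lemma sqdiff_mult: "((\<sigma>::real) * k - \<sigma> * k')\<^sup>2 = \<sigma>\<^sup>2 * (k - k')\<^sup>2"
  by (simp add: power2_eq_square algebra_simps)

lemma nd_sym: "normal_density k s k' = normal_density k' s k"
  by (simp add: normal_density_def power2_commute)

lemma nd_exp: "\<sigma> > 0 \<Longrightarrow> exp (- (\<sigma> * (k' - k))\<^sup>2 / 2) = sqrt (2 * pi) / \<sigma> * normal_density k (1 / \<sigma>) k'"
  by (simp add: normal_density_def power_mult_distrib real_sqrt_divide field_simps power2_commute sqdiff_mult)

lemma nd_exp': "\<sigma> > 0 \<Longrightarrow> exp (- (\<sigma> * (k' - k))\<^sup>2 / 2) = sqrt (2 * pi) / \<sigma> * normal_density k' (1 / \<sigma>) k"
  by (simp add: normal_density_def power_mult_distrib real_sqrt_divide field_simps power2_commute sqdiff_mult)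

lemma nn_nd: "s > 0 \<Longrightarrow> (\<integral>\<^sup>+ x. ennreal (normal_density \<mu> s x) \<partial>lborel) = 1"
  by (subst nn_integral_eq_integral) auto

text \<open>The double-integral bound (Schur test with a Gaussian kernel).\<close>
lemma schur_gauss:
  fixes u :: "real \<Rightarrow> real"
  assumes [measurable]: "u \<in> borel_measurable borel" and s: "\<sigma> > 0" and u0: "\<And>x. u x \<ge> 0"
  shows "(\<integral>\<^sup>+ k. \<integral>\<^sup>+ k'. ennreal (u k * u k' * exp (- (\<sigma> * (k' - k))\<^sup>2 / 2)) \<partial>lborel \<partial>lborel)
     \<le> ennreal (sqrt (2 * pi) / \<sigma>) * (\<integral>\<^sup>+ k. ennreal ((u k)\<^sup>2) \<partial>lborel)"
proof -
  define C where "C = sqrt (2 * pi) / \<sigma>"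
  have C0: "C \<ge> 0" using s by (simp add: C_def)
  define A where "A = (\<integral>\<^sup>+ k. \<integral>\<^sup>+ k'. ennreal ((u k)\<^sup>2 / 2 * (C * normal_density k (1/\<sigma>) k')) \<partial>lborel \<partial>lborel)"
  define B where "B = (\<integral>\<^sup>+ k. \<integral>\<^sup>+ k'. ennreal ((u k')\<^sup>2 / 2 * (C * normal_density k' (1/\<sigma>) k)) \<partial>lborel \<partial>lborel)"
  have "(\<integral>\<^sup>+ k. \<integral>\<^sup>+ k'. ennreal (u k * u k' * exp (- (\<sigma> * (k' - k))\<^sup>2 / 2)) \<partial>lborel \<partial>lborel)
     \<le> (\<integral>\<^sup>+ k. \<integral>\<^sup>+ k'. ennreal ((u k)\<^sup>2 / 2 * (C * normal_density k (1/\<sigma>) k')) + ennreal ((u k')\<^sup>2 / 2 * (C * normal_density k' (1/\<sigma>) k)) \<partial>lborel \<partial>lborel)"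
  proof (intro nn_integral_mono)
    fix k k'
    have "u k * u k' \<le> (u k)\<^sup>2 / 2 + (u k')\<^sup>2 / 2"
      using sum_squares_bound[of "u k" "u k'"] by (simp add: power2_eq_square)
    hence "u k * u k' * exp (- (\<sigma> * (k' - k))\<^sup>2 / 2) \<le> ((u k)\<^sup>2 / 2 + (u k')\<^sup>2 / 2) * exp (- (\<sigma> * (k' - k))\<^sup>2 / 2)"
      by (intro mult_right_mono) auto
    also have "\<dots> = (u k)\<^sup>2 / 2 * (C * normal_density k (1/\<sigma>) k') + (u k')\<^sup>2 / 2 * (C * normal_density k' (1/\<sigma>) k)"
      unfolding C_def using nd_exp[OF s, of k' k] nd_sym[of k "1/\<sigma>" k'] by (simp add: algebra_simps)
    finally show "ennreal (u k * u k' * exp (- (\<sigma> * (k' - k))\<^sup>2 / 2))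
       \<le> ennreal ((u k)\<^sup>2 / 2 * (C * normal_density k (1/\<sigma>) k')) + ennreal ((u k')\<^sup>2 / 2 * (C * normal_density k' (1/\<sigma>) k))"
      using C0 by (simp add: ennreal_plus[symmetric] del: ennreal_plus)
  qed
  also have "\<dots> = A + B"
  proof -
    have "\<And>k. (\<integral>\<^sup>+ k'. ennreal ((u k)\<^sup>2 / 2 * (C * normal_density k (1/\<sigma>) k')) + ennreal ((u k')\<^sup>2 / 2 * (C * normal_density k' (1/\<sigma>) k)) \<partial>lborel)
      = (\<integral>\<^sup>+ k'. ennreal ((u k)\<^sup>2 / 2 * (C * normal_density k (1/\<sigma>) k')) \<partial>lborel) + (\<integral>\<^sup>+ k'. ennreal ((u k')\<^sup>2 / 2 * (C * normal_density k' (1/\<sigma>) k)) \<partial>lborel)"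
      by (rule nn_integral_add) auto
    then show ?thesis unfolding A_def B_def
      by (simp, intro nn_integral_add lborel.borel_measurable_nn_integral) auto
  qed
  finally have step1: "(\<integral>\<^sup>+ k. \<integral>\<^sup>+ k'. ennreal (u k * u k' * exp (- (\<sigma> * (k' - k))\<^sup>2 / 2)) \<partial>lborel \<partial>lborel) \<le> A + B" .
  have "B = (\<integral>\<^sup>+ k'. \<integral>\<^sup>+ k. ennreal ((u k')\<^sup>2 / 2 * (C * normal_density k' (1/\<sigma>) k)) \<partial>lborel \<partial>lborel)"
    unfolding B_def by (rule lborel_pair.Fubini') measurable
  also have "\<dots> = A" unfolding A_def by simp
  finally have BA: "B = A" .
  have "A = (\<integral>\<^sup>+ k. ennreal ((u k)\<^sup>2 / 2 * C) \<partial>lborel)" unfolding A_def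
  proof (intro nn_integral_cong)
    fix k
    have "(\<integral>\<^sup>+ k'. ennreal ((u k)\<^sup>2 / 2 * (C * normal_density k (1/\<sigma>) k')) \<partial>lborel)
       = (\<integral>\<^sup>+ k'. ennreal ((u k)\<^sup>2 / 2 * C) * ennreal (normal_density k (1/\<sigma>) k') \<partial>lborel)"
    proof (intro nn_integral_cong)
      fix k'
      have eq: "(u k)\<^sup>2 / 2 * (C * normal_density k (1/\<sigma>) k') = ((u k)\<^sup>2 / 2 * C) * normal_density k (1/\<sigma>) k'"
        by simp
      show "ennreal ((u k)\<^sup>2 / 2 * (C * normal_density k (1/\<sigma>) k')) = ennreal ((u k)\<^sup>2 / 2 * C) * ennreal (normal_density k (1/\<sigma>) k')"
        unfolding eq using C0 by (intro ennreal_mult) (auto simp: normal_density_nonneg)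
    qed
    also have "\<dots> = ennreal ((u k)\<^sup>2 / 2 * C)"
      by (subst nn_integral_cmult) (auto simp: nn_nd s)
    finally show "(\<integral>\<^sup>+ k'. ennreal ((u k)\<^sup>2 / 2 * (C * normal_density k (1/\<sigma>) k')) \<partial>lborel) = ennreal ((u k)\<^sup>2 / 2 * C)" .
  qed
  also have "(\<integral>\<^sup>+ k. ennreal ((u k)\<^sup>2 / 2 * C) \<partial>lborel) = (\<integral>\<^sup>+ k. ennreal (C / 2) * ennreal ((u k)\<^sup>2) \<partial>lborel)"
    using C0 by (intro nn_integral_cong) (simp add: ennreal_mult[symmetric] ac_simps)
  also have "\<dots> = ennreal (C / 2) * (\<integral>\<^sup>+ k. ennreal ((u k)\<^sup>2) \<partial>lborel)"
    by (rule nn_integral_cmult) simp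
  finally have AH: "A = ennreal (C / 2) * (\<integral>\<^sup>+ k. ennreal ((u k)\<^sup>2) \<partial>lborel)" .
  have "A + B = ennreal C * (\<integral>\<^sup>+ k. ennreal ((u k)\<^sup>2) \<partial>lborel)"
  proof -
    have "(2::ennreal) * ennreal (C / 2) = ennreal C"
      using C0 by (simp add: ennreal_mult'[symmetric] ennreal_numeral[symmetric] del: ennreal_numeral)
    then show ?thesis unfolding BA AH by (simp add: mult_2[symmetric] mult.assoc[symmetric])
  qed
  with step1 show ?thesis unfolding C_def by simp
qed


lemma cmod_cis_mult[simp]: "cmod (cis a * z) = cmod z" "cmod (z * cis a) = cmod z"
  by (simp_all add: norm_mult)

lemma bounded_integrable:
  fixes f :: "real \<Rightarrow> 'b::{banach,second_countable_topology}"
  assumes "f \<in> borel_measurable borel" "integrable lborel g" "\<And>x. norm (f x) \<le> g x"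
  shows "integrable lborel f"
proof (rule Bochner_Integration.integrable_bound[of lborel g])
  show "integrable lborel g" by fact
  show "f \<in> borel_measurable lborel" using assms(1) by simp
  show "AE x in lborel. norm (f x) \<le> norm (g x)"
    by (rule AE_I2) (metis assms(3) abs_ge_self order_trans real_norm_def)
qed

lemma plancherel_gauss:
  fixes h :: "real \<Rightarrow> complex" and s :: real
  assumes s2: "s * s = 1" and hm[measurable]: "h \<in> borel_measurable borel"
    and ih: "integrable lborel h" and ih2: "integrable lborel (\<lambda>k. (cmod (h k))\<^sup>2)"
    and sig: "\<sigma> > 0"
  defines "F \<equiv> \<lambda>x. \<integral>k. cis (s * (k * x)) * h k \<partial>lborel"
  shows "integrable lborel (\<lambda>x. (cmod (F x))\<^sup>2 * normal_density 0 \<sigma> x)"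
    and "(\<integral>x. (cmod (F x))\<^sup>2 * normal_density 0 \<sigma> x \<partial>lborel) \<le> sqrt (2 * pi) / \<sigma> * (\<integral>k. (cmod (h k))\<^sup>2 \<partial>lborel)"
proof -
  define N1 where "N1 = (\<integral>k. cmod (h k) \<partial>lborel)"
  define H where "H = (\<integral>k. (cmod (h k))\<^sup>2 \<partial>lborel)"
  define nd where "nd = normal_density 0 \<sigma>"
  have ndm[measurable]: "nd \<in> borel_measurable borel" unfolding nd_def by simp
  have nd0: "\<And>x. nd x \<ge> 0" unfolding nd_def by simp
  have ndi: "integrable lborel nd" unfolding nd_def using sig by simp
  have Fm[measurable]: "F \<in> borel_measurable borel" unfolding F_def by measurable
  have Fb: "cmod (F x) \<le> N1" for x
    unfolding F_def N1_def using integral_norm_bound[of lborel "\<lambda>k. cis (s * (k * x)) * h k"] by simp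
  have N10: "N1 \<ge> 0" unfolding N1_def by simp
  show int1: "integrable lborel (\<lambda>x. (cmod (F x))\<^sup>2 * normal_density 0 \<sigma> x)"
  proof (rule bounded_integrable[of _ "\<lambda>x. N1\<^sup>2 * nd x"])
    show "integrable lborel (\<lambda>x. N1\<^sup>2 * nd x)" using ndi by simp
    fix x
    have "(cmod (F x))\<^sup>2 \<le> N1\<^sup>2" using Fb[of x] by (simp add: power_mono)
    then show "norm ((cmod (F x))\<^sup>2 * normal_density 0 \<sigma> x) \<le> N1\<^sup>2 * nd x"
      using nd0[of x] unfolding nd_def by (simp add: abs_mult mult_right_mono)
  qed simp
  define a where "a = (\<lambda>x. cnj (F x) * complex_of_real (nd x))"
  have am[measurable]: "a \<in> borel_measurable borel" unfolding a_def by measurable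
  have ia: "integrable lborel a"
  proof (rule bounded_integrable[of _ "\<lambda>x. N1 * nd x"])
    show "integrable lborel (\<lambda>x. N1 * nd x)" using ndi by simp
    fix x show "norm (a x) \<le> N1 * nd x" unfolding a_def using Fb[of x] nd0[of x]
      by (simp add: norm_mult abs_of_nonneg mult_right_mono)
  qed simp
  define E where "E = (\<lambda>k k'. exp (- (\<sigma> * (k' - k))\<^sup>2 / 2))"
  define G where "G = (\<lambda>k. \<integral>k'. h k' * complex_of_real (E k k') \<partial>lborel)"
  have E01: "0 \<le> E k k'" "E k k' \<le> 1" for k k' unfolding E_def by auto
  have Gm[measurable]: "G \<in> borel_measurable borel" unfolding G_def E_def by measurable
  have iG: "integrable lborel (\<lambda>k'. h k' * complex_of_real (E k k'))" for k
  proof (rule bounded_integrable[of _ "\<lambda>k'. cmod (h k')"])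
    show "(\<lambda>k'. h k' * complex_of_real (E k k')) \<in> borel_measurable borel" unfolding E_def by measurable
    show "integrable lborel (\<lambda>k'. cmod (h k'))" using ih by simp
    fix k' show "norm (h k' * complex_of_real (E k k')) \<le> cmod (h k')"
      using E01[of k k'] by (simp add: norm_mult mult_left_le)
  qed
  have Gb: "cmod (G k) \<le> N1" for k
  proof -
    have "cmod (G k) \<le> (\<integral>k'. cmod (h k' * complex_of_real (E k k')) \<partial>lborel)"
      unfolding G_def by (rule integral_norm_bound)
    also have "\<dots> \<le> N1" unfolding N1_def
    proof (intro integral_mono)
      show "integrable lborel (\<lambda>k'. cmod (h k' * complex_of_real (E k k')))"
        using integrable_norm[OF iG[of k]] .
      show "integrable lborel (\<lambda>k. cmod (h k))" using ih by simp
      fix k' show "cmod (h k' * complex_of_real (E k k')) \<le> cmod (h k')"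
        using E01[of k k'] by (simp add: norm_mult mult_left_le)
    qed
    finally show ?thesis .
  qed
  have inner: "(\<integral>x. a x * cis (s * (k * x)) \<partial>lborel) = cnj (G k)" for k
  proof -
    have "(\<integral>x. F x * (complex_of_real (nd x) * cis (- s * (k * x))) \<partial>lborel)
        = (\<integral>x. (complex_of_real (nd x) * cis (- s * (k * x))) * (\<integral>k'. h k' * cis (s * (k' * x)) \<partial>lborel) \<partial>lborel)"
      unfolding F_def by (simp add: mult.commute)
    also have "\<dots> = (\<integral>k'. h k' * (\<integral>x. (complex_of_real (nd x) * cis (- s * (k * x))) * cis (s * (k' * x)) \<partial>lborel) \<partial>lborel)"
    proof (rule fub_swap)
      show "integrable lborel (\<lambda>x. complex_of_real (nd x) * cis (- s * (k * x)))"
      proof (rule bounded_integrable[of _ nd])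
        show "(\<lambda>x. complex_of_real (nd x) * cis (- s * (k * x))) \<in> borel_measurable borel" by measurable
        fix x show "norm (complex_of_real (nd x) * cis (- s * (k * x))) \<le> nd x" using nd0[of x] by (simp add: norm_mult)
      qed (rule ndi)
    qed (use ih in \<open>auto\<close>)
    also have "\<dots> = (\<integral>k'. h k' * complex_of_real (E k k') \<partial>lborel)"
    proof -
      have "(\<integral>x. (complex_of_real (nd x) * cis (- s * (k * x))) * cis (s * (k' * x)) \<partial>lborel) = complex_of_real (E k k')" for k'
      proof -
        have "(\<integral>x. (complex_of_real (nd x) * cis (- s * (k * x))) * cis (s * (k' * x)) \<partial>lborel)
            = (\<integral>x. cis ((s * (k' - k)) * x) * complex_of_real (normal_density 0 \<sigma> x) \<partial>lborel)"
          proof (intro Bochner_Integration.integral_cong refl)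
          fix x
          have "cis (- s * (k * x)) * cis (s * (k' * x)) = cis ((s * (k' - k)) * x)"
            by (simp add: cis_mult algebra_simps)
          then show "complex_of_real (nd x) * cis (- s * (k * x)) * cis (s * (k' * x)) =
            cis (s * (k' - k) * x) * complex_of_real (normal_density 0 \<sigma> x)"
            unfolding nd_def by (simp add: mult_ac)
        qed
        also have "\<dots> = complex_of_real (exp (- (\<sigma> * (s * (k' - k)))\<^sup>2 / 2))"
          by (rule gauss_ft[OF sig])
        also have "(\<sigma> * (s * (k' - k)))\<^sup>2 = (\<sigma> * (k' - k))\<^sup>2"
          using s2 by (simp add: power2_eq_square algebra_simps)
        finally show ?thesis unfolding E_def .
      qed
      then show ?thesis by simp
    qed
    finally have eq: "(\<integral>x. F x * (complex_of_real (nd x) * cis (- s * (k * x))) \<partial>lborel) = G k"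
      unfolding G_def .
    have "(\<integral>x. a x * cis (s * (k * x)) \<partial>lborel) = (\<integral>x. cnj (F x * (complex_of_real (nd x) * cis (- s * (k * x)))) \<partial>lborel)"
      unfolding a_def by (intro Bochner_Integration.integral_cong refl) (simp add: cis_cnj)
    also have "\<dots> = cnj (G k)" by (simp only: Bochner_Integration.integral_cnj eq)
    finally show ?thesis .
  qed
  have "complex_of_real (\<integral>x. (cmod (F x))\<^sup>2 * normal_density 0 \<sigma> x \<partial>lborel)
      = (\<integral>x. a x * F x \<partial>lborel)"
  proof -
    have "\<And>x. complex_of_real ((cmod (F x))\<^sup>2 * normal_density 0 \<sigma> x) = a x * F x"
      unfolding a_def nd_def by (simp only: of_real_mult complex_norm_square) (simp add: mult_ac)
    then show ?thesis by (simp flip: integral_complex_of_real)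
  qed
  also have "\<dots> = (\<integral>x. a x * (\<integral>k. h k * cis (s * (k * x)) \<partial>lborel) \<partial>lborel)"
    unfolding F_def by (simp add: mult.commute)
  also have "\<dots> = (\<integral>k. h k * (\<integral>x. a x * cis (s * (k * x)) \<partial>lborel) \<partial>lborel)"
    by (rule fub_swap) (use ia ih in auto)
  also have "\<dots> = (\<integral>k. h k * cnj (G k) \<partial>lborel)" by (simp add: inner)
  finally have Req: "complex_of_real (\<integral>x. (cmod (F x))\<^sup>2 * normal_density 0 \<sigma> x \<partial>lborel) = (\<integral>k. h k * cnj (G k) \<partial>lborel)" .
  have ihG: "integrable lborel (\<lambda>k. h k * cnj (G k))"
  proof (rule bounded_integrable[of _ "\<lambda>k. cmod (h k) * N1"])
    show "(\<lambda>k. h k * cnj (G k)) \<in> borel_measurable borel" by measurable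
    show "integrable lborel (\<lambda>k. cmod (h k) * N1)" using ih by simp
    fix k show "norm (h k * cnj (G k)) \<le> cmod (h k) * N1" using Gb[of k] by (simp add: norm_mult mult_left_mono)
  qed
  define R where "R = (\<integral>x. (cmod (F x))\<^sup>2 * normal_density 0 \<sigma> x \<partial>lborel)"
  have R0: "R \<ge> 0" unfolding R_def by (intro integral_nonneg_AE) auto
  have "ennreal R = ennreal (norm (\<integral>k. h k * cnj (G k) \<partial>lborel))"
    using Req R0 unfolding R_def by (metis norm_of_real abs_of_nonneg)
  also have "\<dots> \<le> (\<integral>\<^sup>+ k. ennreal (norm (h k * cnj (G k))) \<partial>lborel)"
    by (rule integral_norm_bound_ennreal[OF ihG])
  also have "\<dots> \<le> (\<integral>\<^sup>+ k. ennreal (cmod (h k)) * (\<integral>\<^sup>+ k'. ennreal (cmod (h k') * E k k') \<partial>lborel) \<partial>lborel)"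
  proof (intro nn_integral_mono)
    fix k
    have "ennreal (cmod (G k)) \<le> (\<integral>\<^sup>+ k'. ennreal (norm (h k' * complex_of_real (E k k'))) \<partial>lborel)"
      unfolding G_def by (rule integral_norm_bound_ennreal[OF iG])
    also have "\<dots> = (\<integral>\<^sup>+ k'. ennreal (cmod (h k') * E k k') \<partial>lborel)"
      using E01 by (simp add: norm_mult abs_of_nonneg)
    finally have g: "ennreal (cmod (G k)) \<le> (\<integral>\<^sup>+ k'. ennreal (cmod (h k') * E k k') \<partial>lborel)" .
    have "ennreal (norm (h k * cnj (G k))) = ennreal (cmod (h k)) * ennreal (cmod (G k))"
      by (simp add: norm_mult ennreal_mult)
    also have "\<dots> \<le> ennreal (cmod (h k)) * (\<integral>\<^sup>+ k'. ennreal (cmod (h k') * E k k') \<partial>lborel)"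
      by (intro mult_left_mono g) auto
    finally show "ennreal (norm (h k * cnj (G k))) \<le> ennreal (cmod (h k)) * (\<integral>\<^sup>+ k'. ennreal (cmod (h k') * E k k') \<partial>lborel)" .
  qed
  also have "\<dots> = (\<integral>\<^sup>+ k. \<integral>\<^sup>+ k'. ennreal (cmod (h k) * cmod (h k') * exp (- (\<sigma> * (k' - k))\<^sup>2 / 2)) \<partial>lborel \<partial>lborel)"
  proof (intro nn_integral_cong)
    fix k
    have "ennreal (cmod (h k)) * (\<integral>\<^sup>+ k'. ennreal (cmod (h k') * E k k') \<partial>lborel)
       = (\<integral>\<^sup>+ k'. ennreal (cmod (h k)) * ennreal (cmod (h k') * E k k') \<partial>lborel)"
      by (rule nn_integral_cmult[symmetric]) (simp add: E_def)
    also have "\<dots> = (\<integral>\<^sup>+ k'. ennreal (cmod (h k) * cmod (h k') * exp (- (\<sigma> * (k' - k))\<^sup>2 / 2)) \<partial>lborel)"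
      using E01 by (intro nn_integral_cong) (simp add: ennreal_mult E_def mult.assoc)
    finally show "ennreal (cmod (h k)) * (\<integral>\<^sup>+ k'. ennreal (cmod (h k') * E k k') \<partial>lborel) = \<dots>" .
  qed
  also have "\<dots> \<le> ennreal (sqrt (2 * pi) / \<sigma>) * (\<integral>\<^sup>+ k. ennreal ((cmod (h k))\<^sup>2) \<partial>lborel)"
    by (rule schur_gauss[OF _ sig]) auto
  also have "(\<integral>\<^sup>+ k. ennreal ((cmod (h k))\<^sup>2) \<partial>lborel) = ennreal H"
    unfolding H_def by (rule nn_integral_eq_integral[OF ih2]) auto
  also have "ennreal (sqrt (2 * pi) / \<sigma>) * ennreal H = ennreal (sqrt (2 * pi) / \<sigma> * H)"
  proof -
    have H0: "H \<ge> 0" unfolding H_def by simp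
    show ?thesis by (subst ennreal_mult[symmetric]) (use sig H0 in auto)
  qed
  finally have "ennreal R \<le> ennreal (sqrt (2 * pi) / \<sigma> * H)" .
  moreover have "H \<ge> 0" unfolding H_def by simp
  ultimately show "(\<integral>x. (cmod (F x))\<^sup>2 * normal_density 0 \<sigma> x \<partial>lborel) \<le> sqrt (2 * pi) / \<sigma> * (\<integral>k. (cmod (h k))\<^sup>2 \<partial>lborel)"
    unfolding R_def[symmetric] H_def[symmetric] using sig by (subst (asm) ennreal_le_iff) auto
qed


lemma plancherel_le:
  fixes h :: "real \<Rightarrow> complex" and s :: real
  assumes s2: "s * s = 1" and hm[measurable]: "h \<in> borel_measurable borel"
    and ih: "integrable lborel h" and ih2: "integrable lborel (\<lambda>k. (cmod (h k))\<^sup>2)"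
  defines "F \<equiv> \<lambda>x. \<integral>k. cis (s * (k * x)) * h k \<partial>lborel"
  shows "integrable lborel (\<lambda>x. (cmod (F x))\<^sup>2)"
    and "(\<integral>x. (cmod (F x))\<^sup>2 \<partial>lborel) \<le> 2 * pi * (\<integral>k. (cmod (h k))\<^sup>2 \<partial>lborel)"
proof -
  define H where "H = (\<integral>k. (cmod (h k))\<^sup>2 \<partial>lborel)"
  have Fm[measurable]: "F \<in> borel_measurable borel" unfolding F_def by measurable
  define w where "w = (\<lambda>n x. (cmod (F x))\<^sup>2 * exp (- x\<^sup>2 / 2 * (inverse (real (Suc n)))\<^sup>2))"
  have wm[measurable]: "w n \<in> borel_measurable borel" for n unfolding w_def by measurable
  have w0: "w n x \<ge> 0" for n x unfolding w_def by simp
  have wint: "integrable lborel (w n) \<and> (\<integral>x. w n x \<partial>lborel) \<le> 2 * pi * H" for n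
  proof -
    define \<sigma> where "\<sigma> = real (Suc n)"
    have sig: "\<sigma> > 0" unfolding \<sigma>_def by simp
    have weq: "w n x = (\<sigma> * sqrt (2 * pi)) * ((cmod (F x))\<^sup>2 * normal_density 0 \<sigma> x)" for x
    proof -
      have "sqrt (2 * pi * \<sigma>\<^sup>2) = \<sigma> * sqrt (2 * pi)" using sig by (simp add: real_sqrt_mult)
      moreover have "- x\<^sup>2 / 2 * (inverse \<sigma>)\<^sup>2 = - x\<^sup>2 / (2 * \<sigma>\<^sup>2)" using sig by (simp add: field_simps)
      ultimately show ?thesis unfolding w_def normal_density_def \<sigma>_def[symmetric] using sig
        by (simp add: field_simps)
    qed
    have P1: "integrable lborel (\<lambda>x. (cmod (F x))\<^sup>2 * normal_density 0 \<sigma> x)"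
      unfolding F_def by (rule plancherel_gauss(1)[OF s2 hm ih ih2 sig])
    have P2: "(\<integral>x. (cmod (F x))\<^sup>2 * normal_density 0 \<sigma> x \<partial>lborel) \<le> sqrt (2 * pi) / \<sigma> * (\<integral>k. (cmod (h k))\<^sup>2 \<partial>lborel)"
      unfolding F_def by (rule plancherel_gauss(2)[OF s2 hm ih ih2 sig])
    have "integrable lborel (w n)" unfolding weq using P1 by simp
    moreover have "(\<integral>x. w n x \<partial>lborel) = (\<sigma> * sqrt (2 * pi)) * (\<integral>x. (cmod (F x))\<^sup>2 * normal_density 0 \<sigma> x \<partial>lborel)"
      unfolding weq by simp
    moreover have "(\<sigma> * sqrt (2 * pi)) * (\<integral>x. (cmod (F x))\<^sup>2 * normal_density 0 \<sigma> x \<partial>lborel)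
        \<le> (\<sigma> * sqrt (2 * pi)) * (sqrt (2 * pi) / \<sigma> * H)"
      using P2 sig unfolding H_def by (intro mult_left_mono) auto
    moreover have "(\<sigma> * sqrt (2 * pi)) * (sqrt (2 * pi) / \<sigma> * H) = 2 * pi * H"
      using sig by (simp add: field_simps)
    ultimately show ?thesis by simp
  qed
  have lim: "(\<lambda>n. ennreal (w n x)) \<longlonglongrightarrow> ennreal ((cmod (F x))\<^sup>2)" for x
  proof -
    have "(\<lambda>n. w n x) \<longlonglongrightarrow> (cmod (F x))\<^sup>2 * exp (- x\<^sup>2 / 2 * 0\<^sup>2)"
      unfolding w_def by (intro tendsto_intros LIMSEQ_inverse_real_of_nat)
    then show ?thesis by (intro tendsto_ennrealI) simp
  qed
  have "(\<integral>\<^sup>+ x. ennreal ((cmod (F x))\<^sup>2) \<partial>lborel) = (\<integral>\<^sup>+ x. liminf (\<lambda>n. ennreal (w n x)) \<partial>lborel)"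
    by (intro nn_integral_cong) (simp add: lim_imp_Liminf[OF _ lim])
  also have "\<dots> \<le> liminf (\<lambda>n. \<integral>\<^sup>+ x. ennreal (w n x) \<partial>lborel)"
    by (rule nn_integral_liminf) simp
  also have "\<dots> \<le> limsup (\<lambda>n. \<integral>\<^sup>+ x. ennreal (w n x) \<partial>lborel)"
    by (rule Liminf_le_Limsup) simp
  also have "\<dots> \<le> ennreal (2 * pi * H)"
  proof (rule Limsup_bounded, rule always_eventually, rule allI)
    fix n
    have "(\<integral>\<^sup>+ x. ennreal (w n x) \<partial>lborel) = ennreal (\<integral>x. w n x \<partial>lborel)"
      using wint[of n] w0 by (intro nn_integral_eq_integral) auto
    also have "\<dots> \<le> ennreal (2 * pi * H)" using wint[of n] by (intro ennreal_leI) auto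
    finally show "(\<integral>\<^sup>+ x. ennreal (w n x) \<partial>lborel) \<le> ennreal (2 * pi * H)" .
  qed
  finally have NN: "(\<integral>\<^sup>+ x. ennreal ((cmod (F x))\<^sup>2) \<partial>lborel) \<le> ennreal (2 * pi * H)" .
  show int: "integrable lborel (\<lambda>x. (cmod (F x))\<^sup>2)"
  proof (rule integrableI_bounded)
    show "(\<lambda>x. (cmod (F x))\<^sup>2) \<in> borel_measurable lborel" by simp
    show "(\<integral>\<^sup>+ x. ennreal (norm ((cmod (F x))\<^sup>2)) \<partial>lborel) < \<infinity>"
      using NN by (simp add: top.not_eq_extremum order_le_less_trans)
  qed
  have "ennreal (\<integral>x. (cmod (F x))\<^sup>2 \<partial>lborel) \<le> ennreal (2 * pi * H)"
    using NN by (subst (asm) nn_integral_eq_integral[OF int]) auto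
  moreover have "H \<ge> 0" unfolding H_def by simp
  ultimately show "(\<integral>x. (cmod (F x))\<^sup>2 \<partial>lborel) \<le> 2 * pi * (\<integral>k. (cmod (h k))\<^sup>2 \<partial>lborel)"
    unfolding H_def[symmetric] by (subst (asm) ennreal_le_iff) auto
qed


lemma cis_vd:
  "((\<lambda>x. cis (- (k * x))) has_vector_derivative (- (\<i> * complex_of_real k)) * cis (- (k * x))) (at x within S)"
proof -
  have "((\<lambda>x. - (k * x)) has_derivative (\<lambda>t. - (k * t))) (at x within S)"
    by (auto intro!: derivative_eq_intros)
  from has_derivative_cis[OF this]
  show ?thesis unfolding has_vector_derivative_def
    by (rule has_derivative_eq_rhs) (auto simp: fun_eq_iff scaleR_conv_of_real algebra_simps)
qed

context
  fixes u :: "real \<Rightarrow> complex" and D :: "nat \<Rightarrow> real \<Rightarrow> complex" and K :: "real set"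
  assumes D0: "D 0 = u" and Dd: "\<And>j x. (D j has_vector_derivative D (Suc j) x) (at x)"
    and K: "K = fsupport u" and Kc: "compact K"
begin

lemma D_zero: "x \<notin> K \<Longrightarrow> D j x = 0"
proof (induction j arbitrary: x)
  case 0
  have "x \<notin> {x. u x \<noteq> 0}" using 0 closure_subset[of "{x. u x \<noteq> 0}"] unfolding K fsupport_def by fast
  then show ?case unfolding D0 by simp
next
  case (Suc j)
  have oK: "open (- K)" using Kc compact_imp_closed by blast
  have "((\<lambda>y. 0) has_vector_derivative D (Suc j) x) (at x)"
    by (rule has_vector_derivative_transform_within_open[OF Dd oK]) (use Suc in auto)
  moreover have "((\<lambda>y. 0::complex) has_vector_derivative 0) (at x)" by simp
  ultimately show ?case by (rule vector_derivative_unique_at)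
qed

lemma D_cont: "continuous_on A (D j)"
  by (intro continuous_at_imp_continuous_on ballI has_vector_derivative_continuous[OF Dd])

lemma D_meas[measurable]: "D j \<in> borel_measurable borel"
  by (intro borel_measurable_continuous_onI D_cont)

lemma D_ind: "D j x = indicator K x *\<^sub>R D j x"
  using D_zero[of x j] by (cases "x \<in> K") auto

lemma D_int: "integrable lborel (D j)"
proof -
  have "integrable lborel (\<lambda>x. indicator K x *\<^sub>R D j x)"
    by (rule borel_integrable_compact[OF Kc D_cont])
  moreover have "(\<lambda>x. indicator K x *\<^sub>R D j x) = D j" by (intro ext) (rule D_ind[symmetric])
  ultimately show ?thesis by simp
qed

lemma D_bdd: "\<exists>B. \<forall>x. cmod (D j x) \<le> B"
proof -
  have "compact (D j ` K)" by (rule compact_continuous_image[OF D_cont Kc])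
  then obtain B where B: "\<And>y. y \<in> D j ` K \<Longrightarrow> norm y \<le> B"
    using compact_imp_bounded bounded_iff by metis
  show ?thesis
  proof (intro exI allI)
    fix x show "cmod (D j x) \<le> max B 0"
    proof (cases "x \<in> K")
      case True
      then have "cmod (D j x) \<le> B" by (intro B imageI)
      then show ?thesis by simp
    next
      case False
      then show ?thesis using D_zero[of x j] by simp
    qed
  qed
qed

lemma D_int2: "integrable lborel (\<lambda>x. (cmod (D j x))\<^sup>2)"
proof -
  obtain B where B: "\<And>x. cmod (D j x) \<le> B" using D_bdd by blast
  show ?thesis
  proof (rule bounded_integrable[of _ "\<lambda>x. B * cmod (D j x)"])
    show "integrable lborel (\<lambda>x. B * cmod (D j x))" using D_int by simp
    fix x show "norm ((cmod (D j x))\<^sup>2) \<le> B * cmod (D j x)"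
      using B[of x] by (simp add: power2_eq_square mult_right_mono)
  qed simp
qed

lemma fourier_D_Suc: "fourier (D (Suc j)) k = \<i> * complex_of_real k * fourier (D j) k"
proof -
  obtain R where R: "R > 0" "K \<subseteq> ball 0 R"
    using compact_imp_bounded[OF Kc] bounded_subset_ballD by blast
  have RK: "R \<notin> K" "- R \<notin> K" using R by auto
  define g where "g = (\<lambda>x. cis (- (k * x)) * D j x)"
  define g' where "g' = (\<lambda>x. cis (- (k * x)) * D (Suc j) x - \<i> * complex_of_real k * (cis (- (k * x)) * D j x))"
  have gd: "(g has_vector_derivative g' x) (at x within S)" for x S
    unfolding g_def g'_def
    by (rule has_vector_derivative_eq_rhs, rule has_vector_derivative_mult[OF cis_vd has_vector_derivative_at_within[OF Dd]])
      (simp add: algebra_simps)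
  have g'c: "continuous_on A g'" for A
    unfolding g'_def by (intro continuous_intros D_cont)
  have "integral\<^sup>L lborel (\<lambda>x. indicator {-R..R} x *\<^sub>R g' x) = g R - g (- R)"
  proof (rule integral_FTC_atLeastAtMost)
    show "- R \<le> R" using R by simp
    show "continuous_on {- R..R} g'" by (rule g'c)
    fix x show "(g has_vector_derivative g' x) (at x within {- R..R})" by (rule gd)
  qed
  also have "\<dots> = 0" unfolding g_def using D_zero[OF RK(1)] D_zero[OF RK(2)] by simp
  finally have I0: "integral\<^sup>L lborel (\<lambda>x. indicator {-R..R} x *\<^sub>R g' x) = 0" .
  have "\<And>x. indicator {-R..R} x *\<^sub>R g' x = g' x"
  proof -
    fix x show "indicator {-R..R} x *\<^sub>R g' x = g' x"
    proof (cases "x \<in> {-R..R}")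
      case False
      hence "x \<notin> K" using R by (auto simp: dist_real_def abs_le_iff)
      then show ?thesis unfolding g'_def using D_zero[of x] by simp
    qed simp
  qed
  with I0 have I0': "integral\<^sup>L lborel g' = 0" by simp
  have i1: "integrable lborel (\<lambda>x. cis (- (k * x)) * D (Suc j) x)"
  proof (rule bounded_integrable[of _ "\<lambda>x. cmod (D (Suc j) x)"])
    show "(\<lambda>x. cis (- (k * x)) * D (Suc j) x) \<in> borel_measurable borel" by measurable
    show "integrable lborel (\<lambda>x. cmod (D (Suc j) x))" using D_int by simp
  qed (simp add: norm_mult)
  have i2: "integrable lborel (\<lambda>x. cis (- (k * x)) * D j x)"
  proof (rule bounded_integrable[of _ "\<lambda>x. cmod (D j x)"])
    show "(\<lambda>x. cis (- (k * x)) * D j x) \<in> borel_measurable borel" by measurable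
    show "integrable lborel (\<lambda>x. cmod (D j x))" using D_int by simp
  qed (simp add: norm_mult)
  have "integral\<^sup>L lborel g' = fourier (D (Suc j)) k - \<i> * complex_of_real k * fourier (D j) k"
    unfolding g'_def fourier_def using i1 i2 by simp
  with I0' show ?thesis by simp
qed

lemma fourier_D: "fourier (D j) k = (\<i> * complex_of_real k) ^ j * fourier u k"
  by (induction j) (simp_all add: D0 fourier_D_Suc)

lemma fourier_bound: "cmod (fourier (D j) k) \<le> (\<integral>x. cmod (D j x) \<partial>lborel)"
  unfolding fourier_def using integral_norm_bound[of lborel "\<lambda>x. cis (- (k * x)) * D j x"] by (simp add: norm_mult)

lemma fourier_decay: "\<bar>k\<bar> ^ j * cmod (fourier u k) \<le> (\<integral>x. cmod (D j x) \<partial>lborel)"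
  using fourier_bound[of j k] unfolding fourier_D by (simp add: norm_mult norm_power)

end


definition sqi :: "(real \<Rightarrow> complex) \<Rightarrow> bool" where
  "sqi f \<longleftrightarrow> f \<in> borel_measurable borel \<and> integrable lborel (\<lambda>x. (cmod (f x))\<^sup>2)"

lemma sqi_add: "sqi f \<Longrightarrow> sqi g \<Longrightarrow> sqi (\<lambda>x. f x + g x)"
  unfolding sqi_def
proof (elim conjE, intro conjI)
  assume [measurable]: "f \<in> borel_measurable borel" "g \<in> borel_measurable borel"
    and i: "integrable lborel (\<lambda>x. (cmod (f x))\<^sup>2)" "integrable lborel (\<lambda>x. (cmod (g x))\<^sup>2)"
  show "(\<lambda>x. f x + g x) \<in> borel_measurable borel" by measurable
  show "integrable lborel (\<lambda>x. (cmod (f x + g x))\<^sup>2)"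
  proof (rule bounded_integrable[of _ "\<lambda>x. 2 * (cmod (f x))\<^sup>2 + 2 * (cmod (g x))\<^sup>2"])
    show "integrable lborel (\<lambda>x. 2 * (cmod (f x))\<^sup>2 + 2 * (cmod (g x))\<^sup>2)" using i by simp
    show "(\<lambda>x. (cmod (f x + g x))\<^sup>2) \<in> borel_measurable borel" by measurable
    fix x
    have "cmod (f x + g x) \<le> cmod (f x) + cmod (g x)" by (rule norm_triangle_ineq)
    hence "(cmod (f x + g x))\<^sup>2 \<le> (cmod (f x) + cmod (g x))\<^sup>2" by (intro power_mono) auto
    also have "\<dots> \<le> 2 * (cmod (f x))\<^sup>2 + 2 * (cmod (g x))\<^sup>2"
      using sum_squares_bound[of "cmod (f x)" "cmod (g x)"] by (simp add: power2_eq_square algebra_simps)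
    finally show "norm ((cmod (f x + g x))\<^sup>2) \<le> 2 * (cmod (f x))\<^sup>2 + 2 * (cmod (g x))\<^sup>2" by simp
  qed
qed

lemma sqi_cmult: "sqi f \<Longrightarrow> sqi (\<lambda>x. a * f x)"
  unfolding sqi_def by (auto simp: norm_mult power_mult_distrib)

lemma sqi_neg: "sqi f \<Longrightarrow> sqi (\<lambda>x. - f x)"
  unfolding sqi_def by auto

lemma sqi_diff: "sqi f \<Longrightarrow> sqi g \<Longrightarrow> sqi (\<lambda>x. f x - g x)"
  using sqi_add[of f "\<lambda>x. - g x"] sqi_neg[of g] by simp

lemma sqi_ip_int: "sqi f \<Longrightarrow> sqi g \<Longrightarrow> integrable lborel (\<lambda>x. f x * cnj (g x))"
  unfolding sqi_def by (intro integrable_prod_L2) auto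

lemma cs_ip: "sqi f \<Longrightarrow> sqi g \<Longrightarrow>
  cmod (\<integral>x. f x * cnj (g x) \<partial>lborel) \<le> sqrt (\<integral>x. (cmod (f x))\<^sup>2 \<partial>lborel) * sqrt (\<integral>x. (cmod (g x))\<^sup>2 \<partial>lborel)"
proof -
  assume f: "sqi f" and g: "sqi g"
  have "cmod (\<integral>x. f x * cnj (g x) \<partial>lborel) \<le> (\<integral>x. cmod (f x * cnj (g x)) \<partial>lborel)"
    by (rule integral_norm_bound)
  also have "\<dots> = (\<integral>x. cmod (f x) * cmod (g x) \<partial>lborel)" by (simp add: norm_mult)
  also have "\<dots> \<le> sqrt (\<integral>x. (cmod (f x))\<^sup>2 \<partial>lborel) * sqrt (\<integral>x. (cmod (g x))\<^sup>2 \<partial>lborel)"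
    using f g unfolding sqi_def by (intro cs_bound) auto
  finally show ?thesis .
qed

lemma fourier_alt: "fourier g k = (\<integral>x. cis (- 1 * (x * k)) * g x \<partial>lborel)"
  unfolding fourier_def by (simp add: mult.commute)

lemma plancherel_fourier:
  assumes [measurable]: "g \<in> borel_measurable borel" and "integrable lborel g" "integrable lborel (\<lambda>x. (cmod (g x))\<^sup>2)"
  shows "integrable lborel (\<lambda>k. (cmod (fourier g k))\<^sup>2)"
    and "(\<integral>k. (cmod (fourier g k))\<^sup>2 \<partial>lborel) \<le> 2 * pi * (\<integral>x. (cmod (g x))\<^sup>2 \<partial>lborel)"
  unfolding fourier_alt using plancherel_le[of "-1" g] assms by auto

lemma fourier_meas[measurable]: "g \<in> borel_measurable borel \<Longrightarrow> fourier g \<in> borel_measurable borel"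
proof -
  assume [measurable]: "g \<in> borel_measurable borel"
  show ?thesis unfolding fourier_def[abs_def] by measurable
qed

lemma fourier_add:
  "integrable lborel f \<Longrightarrow> integrable lborel g \<Longrightarrow> f \<in> borel_measurable borel \<Longrightarrow> g \<in> borel_measurable borel \<Longrightarrow>
   fourier (\<lambda>x. f x + g x) k = fourier f k + fourier g k"
proof -
  assume i: "integrable lborel f" "integrable lborel g" and [measurable]: "f \<in> borel_measurable borel" "g \<in> borel_measurable borel"
  have i1: "integrable lborel (\<lambda>x. cis (- (k * x)) * f x)"
  proof (rule bounded_integrable[of _ "\<lambda>x. cmod (f x)"])
    show "(\<lambda>x. cis (- (k * x)) * f x) \<in> borel_measurable borel" by measurable
  qed (use i in simp_all)
  have i2: "integrable lborel (\<lambda>x. cis (- (k * x)) * g x)"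
  proof (rule bounded_integrable[of _ "\<lambda>x. cmod (g x)"])
    show "(\<lambda>x. cis (- (k * x)) * g x) \<in> borel_measurable borel" by measurable
  qed (use i in simp_all)
  show ?thesis unfolding fourier_def using i1 i2 by (simp add: distrib_left)
qed

lemma ip_fourier:
  assumes [measurable]: "p \<in> borel_measurable borel" "u \<in> borel_measurable borel"
    and ip: "integrable lborel p" and iu: "integrable lborel u"
  shows "(\<integral>x. (\<integral>k. cis (k * x) * p k \<partial>lborel) * cnj (u x) \<partial>lborel) = (\<integral>k. p k * cnj (fourier u k) \<partial>lborel)"
proof -
  have "(\<integral>x. (\<integral>k. cis (k * x) * p k \<partial>lborel) * cnj (u x) \<partial>lborel)
     = (\<integral>x. cnj (u x) * (\<integral>k. p k * cis (k * x) \<partial>lborel) \<partial>lborel)"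
    by (simp add: mult.commute)
  also have "\<dots> = (\<integral>k. p k * (\<integral>x. cnj (u x) * cis (k * x) \<partial>lborel) \<partial>lborel)"
  proof (rule fub_swap)
    show "integrable lborel (\<lambda>x. cnj (u x))"
      by (rule bounded_integrable[of _ "\<lambda>x. cmod (u x)"]) (use iu in simp_all)
  qed (use ip in simp_all)
  also have "\<dots> = (\<integral>k. p k * cnj (fourier u k) \<partial>lborel)"
  proof -
    have "(\<integral>x. cnj (u x) * cis (k * x) \<partial>lborel) = cnj (fourier u k)" for k
    proof -
      have "(\<integral>x. cnj (u x) * cis (k * x) \<partial>lborel) = (\<integral>x. cnj (cis (- (k * x)) * u x) \<partial>lborel)"
        by (intro Bochner_Integration.integral_cong refl) (simp add: cis_cnj mult.commute)
      also have "\<dots> = cnj (fourier u k)" unfolding fourier_def by (rule Bochner_Integration.integral_cnj)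
      finally show ?thesis .
    qed
    then show ?thesis by simp
  qed
  finally show ?thesis .
qed

lemma Esym_props:
  assumes lam: "lam > 0"
  shows "cmod (Esym c lam k) \<le> 1" "Re (Esym c lam k) \<ge> 0"
proof -
  have nz: "complex_of_real lam - \<i> * complex_of_real (c * k) \<noteq> 0"
    using lam by (auto simp: complex_eq_iff)
  have d: "cmod (complex_of_real lam - \<i> * complex_of_real (c * k)) \<ge> lam"
  proof -
    have "cmod (complex_of_real lam - \<i> * complex_of_real (c * k)) = sqrt (lam\<^sup>2 + (c * k)\<^sup>2)"
      by (simp add: cmod_def)
    also have "\<dots> \<ge> sqrt (lam\<^sup>2)" by (intro real_sqrt_le_mono) simp
    finally show ?thesis using lam by simp
  qed
  show "cmod (Esym c lam k) \<le> 1"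
    unfolding Esym_def using lam d by (simp add: norm_divide divide_le_eq_1)
  show "Re (Esym c lam k) \<ge> 0" unfolding Esym_def using lam by (simp add: Re_divide)
qed

lemma Esym_meas[measurable]: "Esym c lam \<in> borel_measurable borel"
  unfolding Esym_def[abs_def] by measurable


lemma inv1sq_int: "integrable lborel (\<lambda>k::real. inverse (1 + k\<^sup>2))"
  using integrable_inverse_1_plus_square unfolding set_integrable_def by simp

lemma pow_bound: "(x::real) \<ge> 0 \<Longrightarrow> (1 + x) ^ N \<le> 2 ^ N * (1 + x ^ N)"
proof (cases "x \<le> 1")
  case True
  assume x: "x \<ge> 0"
  have "(1 + x) ^ N \<le> 2 ^ N" using True x by (intro power_mono) auto
  also have "\<dots> \<le> 2 ^ N * (1 + x ^ N)" using x by simp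
  finally show ?thesis .
next
  case False
  assume x: "x \<ge> 0"
  have "(1 + x) ^ N \<le> (2 * x) ^ N" using False by (intro power_mono) auto
  also have "\<dots> = 2 ^ N * x ^ N" by (simp add: power_mult_distrib)
  also have "\<dots> \<le> 2 ^ N * (1 + x ^ N)" by simp
  finally show ?thesis .
qed

lemma alpha_poly_bound:
  fixes \<alpha> :: "real \<Rightarrow> real"
  assumes \<alpha>_nonneg: "\<forall>k. \<alpha> k \<ge> 0" and m: "m \<ge> 1" and b: "b > 0"
    and \<alpha>_growth: "\<exists>R. \<forall>k. \<bar>k\<bar> \<ge> R \<longrightarrow> a * \<bar>k\<bar> powr m \<le> \<alpha> k \<and> \<alpha> k \<le> b * \<bar>k\<bar> powr m"
    and \<alpha>_locbdd: "\<forall>K. compact K \<longrightarrow> bounded (\<alpha> ` K)"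
  shows "\<exists>A M. A \<ge> 0 \<and> (\<forall>k. \<alpha> k \<le> A * (1 + k\<^sup>2) ^ M)"
proof -
  obtain R where R: "\<And>k. \<bar>k\<bar> \<ge> R \<Longrightarrow> \<alpha> k \<le> b * \<bar>k\<bar> powr m" using \<alpha>_growth by blast
  have "bounded (\<alpha> ` cball 0 \<bar>R\<bar>)" using \<alpha>_locbdd by simp
  then obtain A0 where A0: "\<And>y. y \<in> \<alpha> ` cball 0 \<bar>R\<bar> \<Longrightarrow> norm y \<le> A0" using bounded_iff by metis
  define M where "M = nat \<lceil>m\<rceil>"
  have mM: "m \<le> real M" unfolding M_def using m by linarith
  show ?thesis
  proof (intro exI conjI allI)
    show "max A0 0 + b \<ge> 0" using b by simp
    fix k :: real
    have one: "1 \<le> (1 + k\<^sup>2) ^ M" using one_le_power[of "1 + k\<^sup>2" M] by simp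
    show "\<alpha> k \<le> (max A0 0 + b) * (1 + k\<^sup>2) ^ M"
    proof (cases "\<bar>k\<bar> \<le> \<bar>R\<bar>")
      case True
      then have "\<alpha> k \<le> A0" using A0[of "\<alpha> k"] by (auto simp: dist_real_def)
      also have "\<dots> \<le> (max A0 0 + b) * 1" using b by simp
      also have "\<dots> \<le> (max A0 0 + b) * (1 + k\<^sup>2) ^ M" using b one by (intro mult_left_mono) auto
      finally show ?thesis .
    next
      case False
      then have "\<alpha> k \<le> b * \<bar>k\<bar> powr m" using R by auto
      also have "\<bar>k\<bar> powr m \<le> (1 + k\<^sup>2) powr m"
      proof (intro powr_mono2)
        have "0 \<le> (\<bar>k\<bar> - 1)\<^sup>2" by simp
        hence "2 * \<bar>k\<bar> \<le> k\<^sup>2 + 1" by (simp add: power2_diff power2_abs)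
        then show "\<bar>k\<bar> \<le> 1 + k\<^sup>2" using zero_le_power2[of k] by linarith
      qed (use m in auto)
      also have "\<dots> \<le> (1 + k\<^sup>2) powr (real M)" by (intro powr_mono mM) simp
      also have "\<dots> = (1 + k\<^sup>2) ^ M" by (simp add: powr_realpow add_pos_nonneg)
      finally have "\<alpha> k \<le> b * (1 + k\<^sup>2) ^ M" using b by simp
      also have "\<dots> \<le> (max A0 0 + b) * (1 + k\<^sup>2) ^ M" by (intro mult_right_mono) auto
      finally show ?thesis .
    qed
  qed
qed

context
  fixes u :: "real \<Rightarrow> complex" and D :: "nat \<Rightarrow> real \<Rightarrow> complex" and K :: "real set"
  assumes D0: "D 0 = u" and Dd: "\<And>j x. (D j has_vector_derivative D (Suc j) x) (at x)"
    and K: "K = fsupport u" and Kc: "compact K"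
begin

lemma hat_decay: "\<exists>C. \<forall>k. (1 + k\<^sup>2) ^ N * cmod (fourier u k) \<le> C"
proof (intro exI allI)
  fix k
  define I where "I = (\<lambda>j. \<integral>x. cmod (D j x) \<partial>lborel)"
  have "(1 + k\<^sup>2) ^ N * cmod (fourier u k) \<le> (2 ^ N * (1 + (k\<^sup>2) ^ N)) * cmod (fourier u k)"
    by (intro mult_right_mono pow_bound) auto
  also have "\<dots> = 2 ^ N * (cmod (fourier u k) + \<bar>k\<bar> ^ (2 * N) * cmod (fourier u k))"
  proof -
    have "\<bar>k\<bar> ^ (2 * N) = (k\<^sup>2) ^ N" by (simp only: power_mult power2_abs)
    then show ?thesis by (simp add: algebra_simps)
  qed
  also have "\<dots> \<le> 2 ^ N * (I 0 + I (2 * N))"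
    using fourier_decay[OF D0 Dd K Kc, where j=0 and k=k] fourier_decay[OF D0 Dd K Kc, where j="2 * N" and k=k]
    unfolding I_def by (intro mult_left_mono add_mono) auto
  finally show "(1 + k\<^sup>2) ^ N * cmod (fourier u k) \<le> 2 ^ N * (I 0 + I (2 * N))" .
qed

end


lemma mycnj: "z * cnj z = complex_of_real ((cmod z)\<^sup>2)"
  by (rule complex_norm_square[symmetric])

lemma core:
  fixes \<alpha> df uc :: "real \<Rightarrow> real" and u :: "real \<Rightarrow> complex" and D :: "nat \<Rightarrow> real \<Rightarrow> complex"
    and K :: "real set" and c lam \<delta> :: real and z :: complex
  assumes D0: "D 0 = u" and Dd: "\<And>j x. (D j has_vector_derivative D (Suc j) x) (at x)"
    and K: "K = fsupport u" and Kc: "compact K"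
    and lam: "lam > 0" and c: "c > 1" and \<delta>: "\<delta> = (c - 1) / 8"
    and ucm[measurable]: "uc \<in> borel_measurable borel" and dfc: "continuous_on UNIV df"
    and small: "\<And>x. u x \<noteq> 0 \<Longrightarrow> \<bar>df (uc x)\<bar> \<le> \<delta>"
    and \<alpha>m[measurable]: "\<alpha> \<in> borel_measurable borel" and \<alpha>0: "\<And>k. \<alpha> k \<ge> 0"
    and A0: "A \<ge> 0" and \<alpha>A: "\<And>k. \<alpha> k \<le> A * (1 + k\<^sup>2) ^ M"
    and z_re: "Re z \<le> 1 / 2 * (1 - 1 / c)"
  shows "L2norm (\<lambda>x. Aop \<alpha> df c uc lam u x - z * u x) \<ge> 1 / 4 * (1 - 1 / c) * L2norm u"
proof -
  have \<delta>0: "\<delta> > 0" using c \<delta> by simp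
  have dfm[measurable]: "df \<in> borel_measurable borel" by (intro borel_measurable_continuous_onI dfc)
  have um[measurable]: "u \<in> borel_measurable borel" using D_meas[OF D0 Dd K Kc, of 0] D0 by simp
  have ui: "integrable lborel u" using D_int[OF D0 Dd K Kc, of 0] D0 by simp
  have ui2: "integrable lborel (\<lambda>x. (cmod (u x))\<^sup>2)" using D_int2[OF D0 Dd K Kc, of 0] D0 by simp
  have squ: "sqi u" unfolding sqi_def using ui2 by simp
  define U where "U = (\<integral>x. (cmod (u x))\<^sup>2 \<partial>lborel)"
  have U0: "U \<ge> 0" unfolding U_def by simp
  define h where "h = (\<lambda>y. complex_of_real (df (uc y)) * u y)"
  define g where "g = (\<lambda>y. (1 + complex_of_real (df (uc y))) * u y)"
  have hm[measurable]: "h \<in> borel_measurable borel" unfolding h_def by measurable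
  have gm[measurable]: "g \<in> borel_measurable borel" unfolding g_def by measurable
  have hb: "cmod (h x) \<le> \<delta> * cmod (u x)" for x
  proof (cases "u x = 0")
    case False
    then show ?thesis unfolding h_def using small[OF False] by (simp add: norm_mult mult_right_mono)
  qed (simp add: h_def)
  have g_eq: "g x = u x + h x" for x unfolding g_def h_def by (simp add: algebra_simps)
  have hi: "integrable lborel h"
    by (rule bounded_integrable[of _ "\<lambda>x. \<delta> * cmod (u x)"]) (use ui hb in simp_all)
  have hb2: "(cmod (h x))\<^sup>2 \<le> \<delta>\<^sup>2 * (cmod (u x))\<^sup>2" for x
  proof -
    have "(cmod (h x))\<^sup>2 \<le> (\<delta> * cmod (u x))\<^sup>2" by (rule power_mono[OF hb]) simp
    then show ?thesis by (simp add: power_mult_distrib)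
  qed
  have hi2: "integrable lborel (\<lambda>x. (cmod (h x))\<^sup>2)"
  proof (rule bounded_integrable[of _ "\<lambda>x. \<delta>\<^sup>2 * (cmod (u x))\<^sup>2"])
    show "integrable lborel (\<lambda>x. \<delta>\<^sup>2 * (cmod (u x))\<^sup>2)" using ui2 by simp
    fix x show "norm ((cmod (h x))\<^sup>2) \<le> \<delta>\<^sup>2 * (cmod (u x))\<^sup>2"
      using hb2[of x] by simp
  qed simp
  have sqh: "sqi h" unfolding sqi_def using hi2 by simp
  have sqg: "sqi g" using sqi_add[OF squ sqh] unfolding g_eq[abs_def] .
  have gi: "integrable lborel g" unfolding g_eq[abs_def] using ui hi by simp
  have hU: "(\<integral>x. (cmod (h x))\<^sup>2 \<partial>lborel) \<le> \<delta>\<^sup>2 * U"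
  proof -
    have "(\<integral>x. (cmod (h x))\<^sup>2 \<partial>lborel) \<le> (\<integral>x. \<delta>\<^sup>2 * (cmod (u x))\<^sup>2 \<partial>lborel)"
    proof (rule integral_mono[OF hi2])
      show "integrable lborel (\<lambda>x. \<delta>\<^sup>2 * (cmod (u x))\<^sup>2)" using ui2 by simp
    qed (rule hb2)
    then show ?thesis unfolding U_def by simp
  qed
  define uh where "uh = fourier u"
  define hh where "hh = fourier h"
  define gh where "gh = fourier g"
  have uhm[measurable]: "uh \<in> borel_measurable borel" unfolding uh_def by measurable
  have hhm[measurable]: "hh \<in> borel_measurable borel" unfolding hh_def by measurable
  have ghm[measurable]: "gh \<in> borel_measurable borel" unfolding gh_def by measurable
  have gh_eq: "gh k = uh k + hh k" for k
    unfolding gh_def uh_def hh_def g_eq[abs_def] by (rule fourier_add) (use ui hi in simp_all)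
  have uh2: "integrable lborel (\<lambda>k. (cmod (uh k))\<^sup>2)" "(\<integral>k. (cmod (uh k))\<^sup>2 \<partial>lborel) \<le> 2 * pi * U"
    unfolding uh_def U_def using plancherel_fourier[OF um ui ui2] by auto
  have hh2: "integrable lborel (\<lambda>k. (cmod (hh k))\<^sup>2)" "(\<integral>k. (cmod (hh k))\<^sup>2 \<partial>lborel) \<le> 2 * pi * (\<delta>\<^sup>2 * U)"
  proof -
    have "2 * pi * (\<integral>x. (cmod (h x))\<^sup>2 \<partial>lborel) \<le> 2 * pi * (\<delta>\<^sup>2 * U)" using hU by (intro mult_left_mono) auto
    note * = this
    show "integrable lborel (\<lambda>k. (cmod (hh k))\<^sup>2)" unfolding hh_def using plancherel_fourier(1)[OF hm hi hi2] .
    show "(\<integral>k. (cmod (hh k))\<^sup>2 \<partial>lborel) \<le> 2 * pi * (\<delta>\<^sup>2 * U)"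
      unfolding hh_def using plancherel_fourier(2)[OF hm hi hi2] * by linarith
  qed
  have gh2: "integrable lborel (\<lambda>k. (cmod (gh k))\<^sup>2)"
    unfolding gh_def using plancherel_fourier[OF gm gi] sqg unfolding sqi_def by auto
  define I0 where "I0 = (\<integral>x. cmod (u x) \<partial>lborel)"
  have uhb: "cmod (uh k) \<le> I0" for k
    using fourier_decay[OF D0 Dd K Kc, where j=0 and k=k] D0 unfolding uh_def I0_def by simp
  obtain Cd where Cd: "\<And>k. (1 + k\<^sup>2) ^ Suc M * cmod (uh k) \<le> Cd"
    using hat_decay[OF D0 Dd K Kc, of "Suc M"] unfolding uh_def by blast
  define a1 where "a1 = (\<lambda>k. complex_of_real (\<alpha> k) * uh k)"
  define a2 where "a2 = (\<lambda>k. Esym c lam k * gh k)"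
  have a1m[measurable]: "a1 \<in> borel_measurable borel" unfolding a1_def by measurable
  have a2m[measurable]: "a2 \<in> borel_measurable borel" unfolding a2_def by measurable
  have a1b: "cmod (a1 k) \<le> A * Cd * inverse (1 + k\<^sup>2)" for k
  proof -
    have pos: "(1 + k\<^sup>2) > 0" by (simp add: add_pos_nonneg)
    have "cmod (a1 k) = \<alpha> k * cmod (uh k)" unfolding a1_def using \<alpha>0[of k] by (simp add: norm_mult)
    also have "\<dots> \<le> A * (1 + k\<^sup>2) ^ M * cmod (uh k)" by (intro mult_right_mono \<alpha>A) simp
    also have "\<dots> = A * ((1 + k\<^sup>2) ^ Suc M * cmod (uh k)) * inverse (1 + k\<^sup>2)"
      using pos by (simp add: field_simps)
    also have "\<dots> \<le> A * Cd * inverse (1 + k\<^sup>2)"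
      using pos A0 Cd[of k] by (intro mult_right_mono mult_left_mono) auto
    finally show ?thesis .
  qed
  have Cd0: "A * Cd \<ge> 0" using a1b[of 0] norm_ge_zero[of "a1 0"] by (simp del: norm_ge_zero)
  have a1i: "integrable lborel a1"
  proof (rule bounded_integrable[of _ "\<lambda>k. A * Cd * inverse (1 + k\<^sup>2)"])
    show "integrable lborel (\<lambda>k. A * Cd * inverse (1 + k\<^sup>2))" using inv1sq_int by simp
    show "a1 \<in> borel_measurable borel" by (rule a1m)
    fix k show "norm (a1 k) \<le> A * Cd * inverse (1 + k\<^sup>2)" by (rule a1b)
  qed
  have a1i2: "integrable lborel (\<lambda>k. (cmod (a1 k))\<^sup>2)"
  proof (rule bounded_integrable[of _ "\<lambda>k. (A * Cd)\<^sup>2 * inverse (1 + k\<^sup>2)"])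
    show "integrable lborel (\<lambda>k. (A * Cd)\<^sup>2 * inverse (1 + k\<^sup>2))" using inv1sq_int by simp
    fix k :: real
    have pos: "(1 + k\<^sup>2) \<ge> 1" by simp
    have "(cmod (a1 k))\<^sup>2 \<le> (A * Cd * inverse (1 + k\<^sup>2))\<^sup>2" by (rule power_mono[OF a1b]) simp
    also have "\<dots> = (A * Cd)\<^sup>2 * (inverse (1 + k\<^sup>2) * inverse (1 + k\<^sup>2))" by (simp add: power2_eq_square)
    also have "\<dots> \<le> (A * Cd)\<^sup>2 * (inverse (1 + k\<^sup>2) * 1)"
      using pos by (intro mult_left_mono) (auto simp: inverse_le_1_iff)
    finally show "norm ((cmod (a1 k))\<^sup>2) \<le> (A * Cd)\<^sup>2 * inverse (1 + k\<^sup>2)" by simp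
  qed measurable
  have Eb: "cmod (Esym c lam k) \<le> 1" "Re (Esym c lam k) \<ge> 0" for k using Esym_props[OF lam] by auto
  have E2: "(cmod (Esym c lam k))\<^sup>2 \<le> (1 + lam\<^sup>2 / c\<^sup>2) * inverse (1 + k\<^sup>2)" for k
  proof -
    have d: "cmod (complex_of_real lam - \<i> * complex_of_real (c * k)) = sqrt (lam\<^sup>2 + (c * k)\<^sup>2)"
      by (simp add: cmod_def)
    have pos: "lam\<^sup>2 + (c * k)\<^sup>2 > 0" using lam by (simp add: add_pos_nonneg)
    have pos2: "1 + k\<^sup>2 > 0" by (simp add: add_pos_nonneg)
    have n: "(cmod (Esym c lam k))\<^sup>2 = lam\<^sup>2 / (lam\<^sup>2 + (c * k)\<^sup>2)"
      unfolding Esym_def norm_divide d using lam pos by (simp add: power_divide)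
    have key: "lam\<^sup>2 * (1 + k\<^sup>2) \<le> (1 + lam\<^sup>2 / c\<^sup>2) * (lam\<^sup>2 + (c * k)\<^sup>2)"
    proof -
      have "(1 + lam\<^sup>2 / c\<^sup>2) * (lam\<^sup>2 + (c * k)\<^sup>2) = lam\<^sup>2 * (1 + k\<^sup>2) + (c * k)\<^sup>2 + (lam\<^sup>2 / c)\<^sup>2"
        using c by (simp add: field_simps power2_eq_square)
      then show ?thesis by simp
    qed
    have "lam\<^sup>2 / (lam\<^sup>2 + (c * k)\<^sup>2) = lam\<^sup>2 * (1 + k\<^sup>2) / ((lam\<^sup>2 + (c * k)\<^sup>2) * (1 + k\<^sup>2))"
      using pos2 by simp
    also have "\<dots> \<le> (1 + lam\<^sup>2 / c\<^sup>2) * (lam\<^sup>2 + (c * k)\<^sup>2) / ((lam\<^sup>2 + (c * k)\<^sup>2) * (1 + k\<^sup>2))"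
      using pos pos2 key by (intro divide_right_mono) auto
    also have "\<dots> = (1 + lam\<^sup>2 / c\<^sup>2) * inverse (1 + k\<^sup>2)"
    proof -
      have gen: "\<And>X P Q::real. P \<noteq> 0 \<Longrightarrow> Q \<noteq> 0 \<Longrightarrow> X * P / (P * Q) = X * inverse Q"
        by (simp add: field_simps)
      show ?thesis by (rule gen) (use pos pos2 in auto)
    qed
    finally show ?thesis unfolding n .
  qed
  have a2i: "integrable lborel a2"
  proof -
    have "sqi (Esym c lam)" unfolding sqi_def
    proof
      show "integrable lborel (\<lambda>k. (cmod (Esym c lam k))\<^sup>2)"
      proof (rule bounded_integrable[of _ "\<lambda>k. (1 + lam\<^sup>2 / c\<^sup>2) * inverse (1 + k\<^sup>2)"])
        show "integrable lborel (\<lambda>k. (1 + lam\<^sup>2 / c\<^sup>2) * inverse (1 + k\<^sup>2))" using inv1sq_int by simp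
        show "(\<lambda>k. (cmod (Esym c lam k))\<^sup>2) \<in> borel_measurable borel" by measurable
        fix k show "norm ((cmod (Esym c lam k))\<^sup>2) \<le> (1 + lam\<^sup>2 / c\<^sup>2) * inverse (1 + k\<^sup>2)" using E2[of k] by simp
      qed
    qed measurable
    moreover have "sqi (\<lambda>k. cnj (gh k))" unfolding sqi_def using gh2 by simp
    ultimately show ?thesis unfolding a2_def using sqi_ip_int[of "Esym c lam" "\<lambda>k. cnj (gh k)"] by simp
  qed
  have a2i2: "integrable lborel (\<lambda>k. (cmod (a2 k))\<^sup>2)"
  proof (rule bounded_integrable[of _ "\<lambda>k. (cmod (gh k))\<^sup>2"])
    fix k :: real
    have "cmod (a2 k) \<le> cmod (gh k)" unfolding a2_def using Eb(1)[of k] by (simp add: norm_mult mult_left_le_one_le)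
    then show "norm ((cmod (a2 k))\<^sup>2) \<le> (cmod (gh k))\<^sup>2" by (simp add: power_mono)
  next
    show "integrable lborel (\<lambda>k. (cmod (gh k))\<^sup>2)" by (rule gh2)
  qed measurable
  define c0 where "c0 = complex_of_real (1 / (2 * pi))"
  define c1 where "c1 = complex_of_real (1 / c)"
  define F1 where "F1 = (\<lambda>x. \<integral>k. cis (k * x) * a1 k \<partial>lborel)"
  define F2 where "F2 = (\<lambda>x. \<integral>k. cis (k * x) * a2 k \<partial>lborel)"
  have F1m[measurable]: "F1 \<in> borel_measurable borel" unfolding F1_def by measurable
  have F2m[measurable]: "F2 \<in> borel_measurable borel" unfolding F2_def by measurable
  have sqF1: "sqi F1" unfolding sqi_def
    using plancherel_le(1)[of 1 a1] a1m a1i a1i2 F1m unfolding F1_def by simp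
  have sqF2: "sqi F2" unfolding sqi_def
    using plancherel_le(1)[of 1 a2] a2m a2i a2i2 F2m unfolding F2_def by simp
  have Mu_eq: "fmult (\<lambda>k. complex_of_real (\<alpha> k)) u x = c0 * F1 x" for x
    unfolding fmult_def inv_fourier_def F1_def a1_def uh_def c0_def by simp
  have Eg_eq: "fmult (Esym c lam) g x = c0 * F2 x" for x
    unfolding fmult_def inv_fourier_def F2_def a2_def gh_def c0_def by simp
  define v where "v = (\<lambda>x. Aop \<alpha> df c uc lam u x - z * u x)"
  have v_eq: "v x = c0 * F1 x + u x - c1 * (g x - c0 * F2 x) - z * u x" for x
    unfolding v_def Aop_def Let_def g_def[symmetric] Mu_eq Eg_eq c1_def by simp
  have sqv: "sqi v"
  proof -
    have "sqi (\<lambda>x. c0 * F1 x + u x - c1 * (g x - c0 * F2 x) - z * u x)"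
      by (intro sqi_diff sqi_add sqi_cmult squ sqF1 sqF2 sqg)
    then show ?thesis unfolding v_eq[abs_def] .
  qed
  have iF1: "integrable lborel (\<lambda>x. F1 x * cnj (u x))" by (rule sqi_ip_int[OF sqF1 squ])
  have iF2: "integrable lborel (\<lambda>x. F2 x * cnj (u x))" by (rule sqi_ip_int[OF sqF2 squ])
  have iu: "integrable lborel (\<lambda>x. u x * cnj (u x))" by (rule sqi_ip_int[OF squ squ])
  have ig: "integrable lborel (\<lambda>x. g x * cnj (u x))" by (rule sqi_ip_int[OF sqg squ])
  have ip1: "(\<integral>x. F1 x * cnj (u x) \<partial>lborel) = (\<integral>k. a1 k * cnj (uh k) \<partial>lborel)"
    unfolding F1_def uh_def by (rule ip_fourier[OF a1m um a1i ui])
  have ip2: "(\<integral>x. F2 x * cnj (u x) \<partial>lborel) = (\<integral>k. a2 k * cnj (uh k) \<partial>lborel)"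
    unfolding F2_def uh_def by (rule ip_fourier[OF a2m um a2i ui])
  have Pv: "(\<integral>x. v x * cnj (u x) \<partial>lborel) = c0 * (\<integral>x. F1 x * cnj (u x) \<partial>lborel) + (\<integral>x. u x * cnj (u x) \<partial>lborel)
      - c1 * ((\<integral>x. g x * cnj (u x) \<partial>lborel) - c0 * (\<integral>x. F2 x * cnj (u x) \<partial>lborel)) - z * (\<integral>x. u x * cnj (u x) \<partial>lborel)"
  proof -
    have "\<And>x. v x * cnj (u x) = c0 * (F1 x * cnj (u x)) + u x * cnj (u x) - c1 * (g x * cnj (u x) - c0 * (F2 x * cnj (u x))) - z * (u x * cnj (u x))"
      unfolding v_eq by (simp add: algebra_simps)
    then show ?thesis using iF1 iF2 iu ig by simp
  qed
  have Pu: "(\<integral>x. u x * cnj (u x) \<partial>lborel) = complex_of_real U"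
  proof -
    have e: "\<And>x. u x * cnj (u x) = complex_of_real ((cmod (u x))\<^sup>2)" by (rule mycnj)
    show ?thesis unfolding U_def by (simp only: e integral_complex_of_real)
  qed
  have Rg: "Re (\<integral>x. g x * cnj (u x) \<partial>lborel) \<le> (1 + \<delta>) * U"
  proof -
    have "Re (\<integral>x. g x * cnj (u x) \<partial>lborel) = (\<integral>x. Re (g x * cnj (u x)) \<partial>lborel)"
      by (rule integral_Re[OF ig, symmetric])
    also have "\<dots> \<le> (\<integral>x. (1 + \<delta>) * (cmod (u x))\<^sup>2 \<partial>lborel)"
    proof (rule integral_mono)
      show "integrable lborel (\<lambda>x. Re (g x * cnj (u x)))" by (rule integrable_Re[OF ig])
      show "integrable lborel (\<lambda>x. (1 + \<delta>) * (cmod (u x))\<^sup>2)" using ui2 by simp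
      fix x
      have e: "g x * cnj (u x) = complex_of_real ((1 + df (uc x)) * (cmod (u x))\<^sup>2)"
        unfolding g_def by (simp only: mult.assoc mycnj) simp
      show "Re (g x * cnj (u x)) \<le> (1 + \<delta>) * (cmod (u x))\<^sup>2"
      proof (cases "u x = 0")
        case False
        then have "1 + df (uc x) \<le> 1 + \<delta>" using small[OF False] by simp
        then show ?thesis unfolding e by (simp add: mult_right_mono)
      qed (simp add: e)
    qed
    also have "\<dots> = (1 + \<delta>) * U" unfolding U_def by simp
    finally show ?thesis .
  qed
  have RF1: "Re (\<integral>k. a1 k * cnj (uh k) \<partial>lborel) \<ge> 0"
  proof -
    have ia: "integrable lborel (\<lambda>k. a1 k * cnj (uh k))"
    proof (rule bounded_integrable[of _ "\<lambda>k. cmod (a1 k) * I0"])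
      show "integrable lborel (\<lambda>k. cmod (a1 k) * I0)" using a1i by simp
      show "(\<lambda>k. a1 k * cnj (uh k)) \<in> borel_measurable borel" by measurable
      fix k :: real show "norm (a1 k * cnj (uh k)) \<le> cmod (a1 k) * I0"
        using uhb[of k] by (simp add: norm_mult mult_left_mono)
    qed
    have "Re (\<integral>k. a1 k * cnj (uh k) \<partial>lborel) = (\<integral>k. Re (a1 k * cnj (uh k)) \<partial>lborel)"
      by (rule integral_Re[OF ia, symmetric])
    also have "\<dots> \<ge> 0"
    proof (rule integral_nonneg_AE, rule AE_I2)
      fix k
      have "a1 k * cnj (uh k) = complex_of_real (\<alpha> k * (cmod (uh k))\<^sup>2)"
        unfolding a1_def by (simp only: mult.assoc mycnj) simp
      then show "0 \<le> Re (a1 k * cnj (uh k))" using \<alpha>0[of k] by simp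
    qed
    finally show ?thesis .
  qed
  have RF2: "Re (\<integral>k. a2 k * cnj (uh k) \<partial>lborel) \<ge> - (2 * pi * \<delta> * U)"
  proof -
    have squh: "sqi uh" unfolding sqi_def using uh2 by simp
    have sqhh: "sqi hh" unfolding sqi_def using hh2 by simp
    have sqa2: "sqi a2" unfolding sqi_def using a2i2 by simp
    have ia: "integrable lborel (\<lambda>k. a2 k * cnj (uh k))" by (rule sqi_ip_int[OF sqa2 squh])
    have ib: "integrable lborel (\<lambda>k. cmod (hh k) * cmod (uh k))"
      using integrable_norm[OF sqi_ip_int[OF sqhh squh]] by (simp add: norm_mult)
    have A: "Re (\<integral>k. a2 k * cnj (uh k) \<partial>lborel) = (\<integral>k. Re (a2 k * cnj (uh k)) \<partial>lborel)"
      by (rule integral_Re[OF ia, symmetric])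
    have B: "(\<integral>k. Re (a2 k * cnj (uh k)) \<partial>lborel) \<ge> (\<integral>k. - (cmod (hh k) * cmod (uh k)) \<partial>lborel)"
    proof (rule integral_mono)
      show "integrable lborel (\<lambda>k. Re (a2 k * cnj (uh k)))" by (rule integrable_Re[OF ia])
      show "integrable lborel (\<lambda>k. - (cmod (hh k) * cmod (uh k)))" using ib by simp
      fix k
      have e: "a2 k * cnj (uh k) = Esym c lam k * complex_of_real ((cmod (uh k))\<^sup>2) + Esym c lam k * hh k * cnj (uh k)"
        unfolding a2_def gh_eq by (simp only: distrib_left distrib_right mult.assoc mycnj)
      have r1: "Re (Esym c lam k * complex_of_real ((cmod (uh k))\<^sup>2)) \<ge> 0"
        using Eb(2)[of k] by simp
      have "- Re (Esym c lam k * hh k * cnj (uh k)) \<le> cmod (Esym c lam k * hh k * cnj (uh k))"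
        using complex_Re_le_cmod[of "- (Esym c lam k * hh k * cnj (uh k))"] by simp
      also have "\<dots> \<le> cmod (hh k) * cmod (uh k)"
        using Eb(1)[of k] by (simp add: norm_mult mult_left_le_one_le mult.assoc)
      finally show "- (cmod (hh k) * cmod (uh k)) \<le> Re (a2 k * cnj (uh k))"
        unfolding e using r1 by simp
    qed
    have "(\<integral>k. cmod (hh k) * cmod (uh k) \<partial>lborel) \<le> sqrt (\<integral>k. (cmod (hh k))\<^sup>2 \<partial>lborel) * sqrt (\<integral>k. (cmod (uh k))\<^sup>2 \<partial>lborel)"
      by (rule cs_bound) (use hh2 uh2 in auto)
    also have "\<dots> \<le> sqrt (2 * pi * (\<delta>\<^sup>2 * U)) * sqrt (2 * pi * U)"
      using hh2(2) uh2(2) U0 by (intro mult_mono real_sqrt_le_mono) auto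
    also have "\<dots> = 2 * pi * \<delta> * U"
    proof -
      have "sqrt (2 * pi * (\<delta>\<^sup>2 * U)) * sqrt (2 * pi * U) = sqrt ((2 * pi * \<delta> * U)\<^sup>2)"
        by (simp add: real_sqrt_mult[symmetric] power2_eq_square algebra_simps)
      also have "\<dots> = 2 * pi * \<delta> * U" using \<delta>0 U0 by simp
      finally show ?thesis .
    qed
    finally have C: "(\<integral>k. cmod (hh k) * cmod (uh k) \<partial>lborel) \<le> 2 * pi * \<delta> * U" .
    show ?thesis using A B C by simp
  qed
  define P1 where "P1 = (\<integral>k. a1 k * cnj (uh k) \<partial>lborel)"
  define P2 where "P2 = (\<integral>k. a2 k * cnj (uh k) \<partial>lborel)"
  define Pg where "Pg = (\<integral>x. g x * cnj (u x) \<partial>lborel)"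
  have ReV: "Re (\<integral>x. v x * cnj (u x) \<partial>lborel) = (1 / (2 * pi)) * Re P1 + U - (1 / c) * (Re Pg - (1 / (2 * pi)) * Re P2) - Re z * U"
    unfolding Pv Pu ip1 ip2 c0_def c1_def P1_def P2_def Pg_def by simp
  have t1: "(1 / (2 * pi)) * Re P1 \<ge> 0" using RF1 unfolding P1_def by simp
  have t2: "(1 / (2 * pi)) * Re P2 \<ge> - (\<delta> * U)"
  proof -
    have "(1 / (2 * pi)) * Re P2 \<ge> (1 / (2 * pi)) * (- (2 * pi * \<delta> * U))"
      using RF2 unfolding P2_def by (intro mult_left_mono) auto
    then show ?thesis by simp
  qed
  have t3: "(1 / c) * (Re Pg - (1 / (2 * pi)) * Re P2) \<le> (1 / c) * ((1 + \<delta>) * U + \<delta> * U)"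
    using Rg t2 c unfolding Pg_def by (intro mult_left_mono) auto
  have t4: "Re z * U \<le> 1 / 2 * (1 - 1 / c) * U" using z_re U0 by (rule mult_right_mono)
  have t5: "U - (1 / c) * ((1 + \<delta>) * U + \<delta> * U) - 1 / 2 * (1 - 1 / c) * U = 1 / 4 * (1 - 1 / c) * U"
    unfolding \<delta> using c by (simp add: field_simps)
  have ReQ: "Re (\<integral>x. v x * cnj (u x) \<partial>lborel) \<ge> 1 / 4 * (1 - 1 / c) * U"
    unfolding ReV using t1 t3 t4 t5 by linarith
  have cs: "cmod (\<integral>x. v x * cnj (u x) \<partial>lborel) \<le> sqrt (\<integral>x. (cmod (v x))\<^sup>2 \<partial>lborel) * sqrt U"
    unfolding U_def by (rule cs_ip[OF sqv squ])
  define Lv where "Lv = sqrt (\<integral>x. (cmod (v x))\<^sup>2 \<partial>lborel)"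
  have Lv0: "Lv \<ge> 0" unfolding Lv_def by (intro real_sqrt_ge_zero integral_nonneg_AE) auto
  have main: "1 / 4 * (1 - 1 / c) * U \<le> Lv * sqrt U"
    using ReQ complex_Re_le_cmod[of "\<integral>x. v x * cnj (u x) \<partial>lborel"] cs unfolding Lv_def by linarith
  have goal: "1 / 4 * (1 - 1 / c) * sqrt U \<le> Lv"
  proof (cases "sqrt U = 0")
    case True
    then show ?thesis using Lv0 by simp
  next
    case False
    then have sp: "sqrt U > 0" using U0 by simp
    have "(1 / 4 * (1 - 1 / c) * sqrt U) * sqrt U \<le> Lv * sqrt U"
      using main U0 by (simp add: mult.assoc)
    then show ?thesis using sp by (rule mult_right_le_imp_le)
  qed
  then show ?thesis unfolding L2norm_def Lv_def v_def U_def .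
qed


theorem mainTheorem9:
  fixes f df \<alpha> uc :: "real \<Rightarrow> real" and a b m c :: real and z :: complex
  assumes f_deriv: "\<forall>x. (f has_real_derivative df x) (at x)"
    and df_cont: "continuous_on UNIV df"
    and f0: "f 0 = 0" and df0: "df 0 = 0"
    and m_ge: "m \<ge> 1" and a_pos: "a > 0" and b_pos: "b > 0"
    and \<alpha>_meas: "\<alpha> \<in> borel_measurable borel"
    and \<alpha>_nonneg: "\<forall>k. \<alpha> k \<ge> 0"
    and \<alpha>_growth: "\<exists>R. \<forall>k. \<bar>k\<bar> \<ge> R \<longrightarrow> a * \<bar>k\<bar> powr m \<le> \<alpha> k \<and> \<alpha> k \<le> b * \<bar>k\<bar> powr m"
    and \<alpha>_locbdd: "\<forall>K. compact K \<longrightarrow> bounded (\<alpha> ` K)"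
    and c_gt: "c > 1"
    and uc_Hm: "sobolev m (\<lambda>x. complex_of_real (uc x))"
    and uc_sol: "solves_profile_eq \<alpha> f c uc"
    and uc_decay: "(uc \<longlongrightarrow> 0) at_infinity"
    and z_re: "Re z \<le> 1 / 2 * (1 - 1 / c)"
  shows "\<exists>n>0. \<forall>u. test_on {x. \<bar>x\<bar> \<ge> n} u \<longrightarrow>
           (\<forall>\<^sub>F lam in at_right 0.
              L2norm (\<lambda>x. Aop \<alpha> df c uc lam u x - z * u x) \<ge> 1 / 4 * (1 - 1 / c) * L2norm u)"
proof -
  define \<delta> where "\<delta> = (c - 1) / 8"
  have \<delta>0: "\<delta> > 0" unfolding \<delta>_def using c_gt by simp
  have isc: "isCont df 0" using df_cont by (simp add: continuous_on_eq_continuous_at)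
  have "((\<lambda>x. df (uc x)) \<longlongrightarrow> df 0) at_infinity" by (rule isCont_tendsto_compose[OF isc uc_decay])
  then have "\<forall>\<^sub>F x in at_infinity. dist (df (uc x)) (df 0) < \<delta>" using \<delta>0 by (rule tendstoD)
  then obtain b0 where b0: "\<And>x. b0 \<le> norm x \<Longrightarrow> \<bar>df (uc x)\<bar> < \<delta>"
    unfolding eventually_at_infinity df0 by (auto simp: dist_real_def)
  have ucc: "(\<lambda>x. complex_of_real (uc x)) \<in> borel_measurable lborel"
    using uc_Hm unfolding sobolev_def is_L2_fourier_def L2_def by blast
  then have [measurable]: "(\<lambda>x. complex_of_real (uc x)) \<in> borel_measurable borel" by simp
  have "(\<lambda>x. Re (complex_of_real (uc x))) \<in> borel_measurable borel" by measurable
  then have ucm: "uc \<in> borel_measurable borel" by simp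
  obtain A M where A0: "A \<ge> 0" and \<alpha>A: "\<And>k. \<alpha> k \<le> A * (1 + k\<^sup>2) ^ M"
    using alpha_poly_bound[OF \<alpha>_nonneg m_ge b_pos \<alpha>_growth \<alpha>_locbdd] by blast
  define n where "n = max b0 1"
  show ?thesis
  proof (intro exI[of _ n] conjI allI impI)
    show "n > 0" unfolding n_def by simp
    fix u assume tu: "test_on {x. \<bar>x\<bar> \<ge> n} u"
    then obtain D where D0: "D 0 = u" and Dd: "\<And>j x. (D j has_vector_derivative D (Suc j) x) (at x)"
      unfolding test_on_def smooth_fun_def by blast
    have Kc: "compact (fsupport u)" and Ks: "fsupport u \<subseteq> {x. \<bar>x\<bar> \<ge> n}"
      using tu unfolding test_on_def by auto
    have small: "\<bar>df (uc x)\<bar> \<le> \<delta>" if ux: "u x \<noteq> 0" for x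
    proof -
      have "x \<in> fsupport u" unfolding fsupport_def using ux closure_subset[of "{x. u x \<noteq> 0}"] by fast
      then have "\<bar>x\<bar> \<ge> n" using Ks by auto
      then have "b0 \<le> norm x" unfolding n_def by simp
      then show ?thesis using b0[of x] by simp
    qed
    show "\<forall>\<^sub>F lam in at_right 0. L2norm (\<lambda>x. Aop \<alpha> df c uc lam u x - z * u x) \<ge> 1 / 4 * (1 - 1 / c) * L2norm u"
      using eventually_at_right_less[of "0::real"]
    proof (rule eventually_mono)
      fix lam :: real assume lam: "0 < lam"
      show "L2norm (\<lambda>x. Aop \<alpha> df c uc lam u x - z * u x) \<ge> 1 / 4 * (1 - 1 / c) * L2norm u"
        by (rule core[OF D0 Dd refl Kc lam c_gt \<delta>_def ucm df_cont small \<alpha>_meas _ A0 \<alpha>A z_re])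
          (use \<alpha>_nonneg in auto)
    qed
  qed
qed


end
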